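(* Let $V=\{a_1,\ldots,a_n\}$ be a set of propositional variables, $\mathcal{R}$ be a set of transition rules on $V$, $F$ be a CTL formula and let $s \models_{\mathcal{R}} F$ denote that $F$ holds at state $s$ in the transition system defined by $\mathcal{R}$. Then $s \models_{\mathcal{R}} F$ iff the sequent $\vdash \llbracket s\rrbracket, [\![F]\!]_{\mathcal{R}}$ is provable in $\mu$MALL.
   Context: $\mu$MALL is multiplicative-additive linear logic extended with least ($\mu$) and greatest ($\nu$) fixed points, with the unfolding rule for $\mu$ and the (co)induction rule for $\nu$ using an invariant. Below $\&$ is additive conjunction (with), $\bigoplus$/$\oplus$ additive disjunction, $\otimes$ multiplicative conjunction, and ⅋ multiplicative disjunction (par). A state $s$ over $V$ is a valuation $V\to\{\mathrm{true},\mathrm{false}\}$, written as a conjunction $p_1(a_1)\wedge\cdots\wedge p_n(a_n)$ with each $p_i$ either "present" ($s(a_i)=\mathrm{true}$) or "absent" ($s(a_i)=\mathrm{false}$). Transition rules have the form $r: s\to s'$, enabling the transition from $s$ to $s'$; the transition system is assumed serial. CTL formulas: $F ::= p \mid F\wedge F\mid F\vee F\mid \mathbf{Q}\mathsf{X}F\mid \mathbf{Q}\mathsf{F}F\mid \mathbf{Q}\mathsf{G}F\mid \mathbf{Q}[F\,\mathsf{U}\,F]$ with $\mathbf{Q}\in\{\mathsf{A},\mathsf{E}\}$ and $p$ a state formula. Encoding: $\llbracket \text{present}(a_i)\rrbracket = a_i$, $\llbracket \text{absent}(a_i)\rrbracket = a_i^\perp$; $\llbracket s\rrbracket = \llbracket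 p_1(a_1)\rrbracket^\perp$ ⅋ $\cdots$ ⅋ $\llbracket p_n(a_n)\rrbracket^\perp$; $\mathrm{pos}(s) = \llbracket p_1(a_1)\rrbracket\otimes\cdots\otimes\llbracket p_n(a_n)\rrbracket = \llbracket s\rrbracket^\perp$; $\mathrm{neg}(s) = (\llbracket p_1(a_1)\rrbracket^\perp\otimes\top)\oplus\cdots\oplus(\llbracket p_n(a_n)\rrbracket^\perp\otimes\top)$; a state formula $p$ is encoded as $\mathrm{pos}(p)$ (variables not occurring in $p$ giving $\top$); CTL $\wedge,\vee$ map to $\&,\oplus$. With $\phi=[\![F]\!]_{\mathcal{R}}$, $\psi=[\![G]\!]_{\mathcal{R}}$, and $T_{\mathsf{A}}(Y) = \mathop{\&}_{s\to s'\in\mathcal{R}}\big(\mathrm{neg}(s)\oplus(\mathrm{pos}(s)\otimes(\llbracket s'\rrbracket$ ⅋ $Y))\big)$, $T_{\mathsf{E}}(Y)=\bigoplus_{s\to s'\in\mathcal{R}}\big(\mathrm{pos}(s)\otimes(\llbracket s'\rrbracket$ ⅋ $Y)\big)$: $[\![\mathsf{AX}F]\!]=T_{\mathsf{A}}(\phi)$, $[\![\mathsf{EX}F]\!]=T_{\mathsf{E}}(\phi)$, $[\![\mathsf{AF}F]\!]=\mu Y.\,\phi\oplus T_{\mathsf{A}}(Y)$, $[\![\mathsf{EF}F]\!]=\mu Y.\,\phi\oplus T_{\mathsf{E}}(Y)$, $[\![\mathsf{AG}F]\!]=\nu Y.\,\phi\,\&\,T_{\mathsf{A}}(Y)$, $[\![\mathsf{EG}F]\!]=\nu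 Y.\,\phi\,\&\,T_{\mathsf{E}}(Y)$, $[\![\mathsf{A}[F\,\mathsf{U}\,G]]\!]=\mu Y.\,\psi\oplus(\phi\,\&\,T_{\mathsf{A}}(Y))$, $[\![\mathsf{E}[F\,\mathsf{U}\,G]]\!]=\mu Y.\,\psi\oplus(\phi\,\&\,T_{\mathsf{E}}(Y))$. *)

theory Defs
  imports Main "HOL-Library.Multiset"
begin

datatype 'a form =
    Atom 'a | NAtom 'a
  | One | Bot | Top | Zero
  | Tensor "'a form" "'a form" | Par "'a form" "'a form"
  | With "'a form" "'a form" | Plus "'a form" "'a form"
  | Mu "'a form" | Nu "'a form"
  | Var nat

text \<open>Negation (De Morgan duality). Bound variables stay positive:
  (mu B)^perp = nu (B^perp) with the bound variable unchanged.\<close>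
fun dual :: "'a form \<Rightarrow> 'a form" where
  "dual (Atom a) = NAtom a"
| "dual (NAtom a) = Atom a"
| "dual One = Bot"
| "dual Bot = One"
| "dual Top = Zero"
| "dual Zero = Top"
| "dual (Tensor A B) = Par (dual A) (dual B)"
| "dual (Par A B) = Tensor (dual A) (dual B)"
| "dual (With A B) = Plus (dual A) (dual B)"
| "dual (Plus A B) = With (dual A) (dual B)"
| "dual (Mu B) = Nu (dual B)"
| "dual (Nu B) = Mu (dual B)"
| "dual (Var i) = Var i"

fun lift :: "nat \<Rightarrow> 'a form \<Rightarrow> 'a form" where
  "lift k (Var i) = (if i < k then Var i else Var (Suc i))"
| "lift k (Tensor A B) = Tensor (lift k A) (lift k B)"
| "lift k (Par A B) = Par (lift k A) (lift k B)"
| "lift k (With A B) = With (lift k A) (lift k B)"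
| "lift k (Plus A B) = Plus (lift k A) (lift k B)"
| "lift k (Mu B) = Mu (lift (Suc k) B)"
| "lift k (Nu B) = Nu (lift (Suc k) B)"
| "lift k A = A"

fun subst :: "nat \<Rightarrow> 'a form \<Rightarrow> 'a form \<Rightarrow> 'a form" where
  "subst k t (Var i) = (if i < k then Var i else if i = k then t else Var (i - 1))"
| "subst k t (Tensor A B) = Tensor (subst k t A) (subst k t B)"
| "subst k t (Par A B) = Par (subst k t A) (subst k t B)"
| "subst k t (With A B) = With (subst k t A) (subst k t B)"
| "subst k t (Plus A B) = Plus (subst k t A) (subst k t B)"
| "subst k t (Mu B) = Mu (subst (Suc k) (lift 0 t) B)"
| "subst k t (Nu B) = Nu (subst (Suc k) (lift 0 t) B)"
| "subst k t A = A"

inductive prov :: "'a form multiset \<Rightarrow> bool" where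
  init: "prov {# Atom a, NAtom a #}"
| cut: "prov (add_mset A \<Gamma>) \<Longrightarrow> prov (add_mset (dual A) \<Delta>) \<Longrightarrow> prov (\<Gamma> + \<Delta>)"
| one: "prov {# One #}"
| bot: "prov \<Gamma> \<Longrightarrow> prov (add_mset Bot \<Gamma>)"
| top: "prov (add_mset Top \<Gamma>)"
| tensor: "prov (add_mset A \<Gamma>) \<Longrightarrow> prov (add_mset B \<Delta>) \<Longrightarrow> prov (add_mset (Tensor A B) (\<Gamma> + \<Delta>))"
| par: "prov (add_mset A (add_mset B \<Gamma>)) \<Longrightarrow> prov (add_mset (Par A B) \<Gamma>)"
| with_r: "prov (add_mset A \<Gamma>) \<Longrightarrow> prov (add_mset B \<Gamma>) \<Longrightarrow> prov (add_mset (With A B) \<Gamma>)"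
| plus1: "prov (add_mset A \<Gamma>) \<Longrightarrow> prov (add_mset (Plus A B) \<Gamma>)"
| plus2: "prov (add_mset B \<Gamma>) \<Longrightarrow> prov (add_mset (Plus A B) \<Gamma>)"
| mu: "prov (add_mset (subst 0 (Mu B) B) \<Gamma>) \<Longrightarrow> prov (add_mset (Mu B) \<Gamma>)"
| nu: "prov (add_mset S \<Gamma>) \<Longrightarrow> prov {# dual S, subst 0 S B #} \<Longrightarrow> prov (add_mset (Nu B) \<Gamma>)"

fun bigop :: "('a form \<Rightarrow> 'a form \<Rightarrow> 'a form) \<Rightarrow> 'a form \<Rightarrow> 'a form list \<Rightarrow> 'a form" where
  "bigop f u [] = u"
| "bigop f u [x] = x"
| "bigop f u (x # xs) = f x (bigop f u xs)"

abbreviation "bigTensor \<equiv> bigop Tensor One"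
abbreviation "bigPar \<equiv> bigop Par Bot"
abbreviation "bigWith \<equiv> bigop With Top"
abbreviation "bigPlus \<equiv> bigop Plus Zero"

type_synonym 'a state = "'a \<Rightarrow> bool"
type_synonym 'a rule = "'a state \<times> 'a state"
text \<open>A state formula: a conjunction of present/absent literals on some of the variables
  (None = variable does not occur).\<close>
type_synonym 'a sformula = "'a \<Rightarrow> bool option"

definition trans :: "'a list \<Rightarrow> 'a rule list \<Rightarrow> 'a state \<Rightarrow> 'a state \<Rightarrow> bool" where
  "trans V R s t \<longleftrightarrow> (\<exists>(r, r') \<in> set R. (\<forall>a\<in>set V. s a = r a) \<and> (\<forall>a\<in>set V. t a = r' a))"

definition serial :: "'a list \<Rightarrow> 'a rule list \<Rightarrow> bool" where
  "serial V R \<longleftrightarrow> (\<forall>s. \<exists>t. trans V R s t)"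

definition is_path :: "'a list \<Rightarrow> 'a rule list \<Rightarrow> 'a state \<Rightarrow> (nat \<Rightarrow> 'a state) \<Rightarrow> bool" where
  "is_path V R s \<pi> \<longleftrightarrow> \<pi> 0 = s \<and> (\<forall>i. trans V R (\<pi> i) (\<pi> (Suc i)))"

datatype 'a ctl =
    SF "'a sformula"
  | CAnd "'a ctl" "'a ctl" | COr "'a ctl" "'a ctl"
  | CAX "'a ctl" | CEX "'a ctl"
  | CAF "'a ctl" | CEF "'a ctl"
  | CAG "'a ctl" | CEG "'a ctl"
  | CAU "'a ctl" "'a ctl" | CEU "'a ctl" "'a ctl"

fun models :: "'a list \<Rightarrow> 'a rule list \<Rightarrow> 'a state \<Rightarrow> 'a ctl \<Rightarrow> bool" where
  "models V R s (SF p) = (\<forall>a\<in>set V. \<forall>b. p a = Some b \<longrightarrow> s a = b)"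
| "models V R s (CAnd F G) = (models V R s F \<and> models V R s G)"
| "models V R s (COr F G) = (models V R s F \<or> models V R s G)"
| "models V R s (CAX F) = (\<forall>t. trans V R s t \<longrightarrow> models V R t F)"
| "models V R s (CEX F) = (\<exists>t. trans V R s t \<and> models V R t F)"
| "models V R s (CAF F) = (\<forall>\<pi>. is_path V R s \<pi> \<longrightarrow> (\<exists>i. models V R (\<pi> i) F))"
| "models V R s (CEF F) = (\<exists>\<pi>. is_path V R s \<pi> \<and> (\<exists>i. models V R (\<pi> i) F))"
| "models V R s (CAG F) = (\<forall>\<pi>. is_path V R s \<pi> \<longrightarrow> (\<forall>i. models V R (\<pi> i) F))"
| "models V R s (CEG F) = (\<exists>\<pi>. is_path V R s \<pi> \<and> (\<forall>i. models V R (\<pi> i) F))"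
| "models V R s (CAU F G) = (\<forall>\<pi>. is_path V R s \<pi> \<longrightarrow>
      (\<exists>i. models V R (\<pi> i) G \<and> (\<forall>j<i. models V R (\<pi> j) F)))"
| "models V R s (CEU F G) = (\<exists>\<pi>. is_path V R s \<pi> \<and>
      (\<exists>i. models V R (\<pi> i) G \<and> (\<forall>j<i. models V R (\<pi> j) F)))"

definition lit :: "'a \<Rightarrow> bool \<Rightarrow> 'a form" where
  "lit a b = (if b then Atom a else NAtom a)"

definition enc_state :: "'a list \<Rightarrow> 'a state \<Rightarrow> 'a form" where
  "enc_state V s = bigPar (map (\<lambda>a. dual (lit a (s a))) V)"

definition pos :: "'a list \<Rightarrow> 'a state \<Rightarrow> 'a form" where
  "pos V s = bigTensor (map (\<lambda>a. lit a (s a)) V)"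

definition neg :: "'a list \<Rightarrow> 'a state \<Rightarrow> 'a form" where
  "neg V s = bigPlus (map (\<lambda>a. Tensor (dual (lit a (s a))) Top) V)"

definition pos_sf :: "'a list \<Rightarrow> 'a sformula \<Rightarrow> 'a form" where
  "pos_sf V p = bigTensor (map (\<lambda>a. case p a of None \<Rightarrow> Top | Some b \<Rightarrow> lit a b) V)"

definition TA :: "'a list \<Rightarrow> 'a rule list \<Rightarrow> 'a form \<Rightarrow> 'a form" where
  "TA V R Y = bigWith (map (\<lambda>(s, s'). Plus (neg V s) (Tensor (pos V s) (Par (enc_state V s') Y))) R)"

definition TE :: "'a list \<Rightarrow> 'a rule list \<Rightarrow> 'a form \<Rightarrow> 'a form" where
  "TE V R Y = bigPlus (map (\<lambda>(s, s'). Tensor (pos V s) (Par (enc_state V s') Y)) R)"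

text \<open>Var 0 is the fixed point variable Y; closed encodings are lifted when put under a binder.\<close>
fun enc :: "'a list \<Rightarrow> 'a rule list \<Rightarrow> 'a ctl \<Rightarrow> 'a form" where
  "enc V R (SF p) = pos_sf V p"
| "enc V R (CAnd F G) = With (enc V R F) (enc V R G)"
| "enc V R (COr F G) = Plus (enc V R F) (enc V R G)"
| "enc V R (CAX F) = TA V R (enc V R F)"
| "enc V R (CEX F) = TE V R (enc V R F)"
| "enc V R (CAF F) = Mu (Plus (lift 0 (enc V R F)) (TA V R (Var 0)))"
| "enc V R (CEF F) = Mu (Plus (lift 0 (enc V R F)) (TE V R (Var 0)))"
| "enc V R (CAG F) = Nu (With (lift 0 (enc V R F)) (TA V R (Var 0)))"
| "enc V R (CEG F) = Nu (With (lift 0 (enc V R F)) (TE V R (Var 0)))"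
| "enc V R (CAU F G) = Mu (Plus (lift 0 (enc V R G)) (With (lift 0 (enc V R F)) (TA V R (Var 0))))"
| "enc V R (CEU F G) = Mu (Plus (lift 0 (enc V R G)) (With (lift 0 (enc V R F)) (TE V R (Var 0))))"

end

theory Submission
  imports Defs
begin


datatype nv = Z | PT nat | PF nat | CT | CF | Pair | Bad

fun nadd :: "nv \<Rightarrow> nv \<Rightarrow> nv" where
  "nadd Z y = y"
| "nadd x Z = x"
| "nadd (PT m) (PT n) = PT (Suc (m+n))"
| "nadd (PF m) (PF n) = PF (Suc (m+n))"
| "nadd (PT m) CT = (if m = 0 then Pair else Bad)"
| "nadd CT (PT m) = (if m = 0 then Pair else Bad)"
| "nadd (PF m) CF = (if m = 0 then Pair else Bad)"
| "nadd CF (PF m) = (if m = 0 then Pair else Bad)"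
| "nadd x y = Bad"

lemma nadd_Bad[simp]: "nadd Bad y = Bad" "nadd y Bad = Bad"
  by (cases y; simp)+

lemma nadd_comm: "nadd x y = nadd y x"
  by (cases x; cases y; simp)

lemma nadd_assoc: "nadd (nadd x y) z = nadd x (nadd y z)"
  by (cases x; cases y; cases z; simp)

instantiation nv :: comm_monoid_add begin
definition "0 = Z"
definition "plus = nadd"
instance
proof
  fix a b c :: nv
  show "a + b + c = a + (b + c)" by (simp add: plus_nv_def nadd_assoc)
  show "a + b = b + a" by (simp add: plus_nv_def nadd_comm)
  show "0 + a = a" by (simp add: plus_nv_def zero_nv_def)
qed
end

lemma nv_simps[simp]: "Bad + y = Bad" "y + Bad = Bad" "Z + y = y" "y + Z = y" "(0::nv) = Z"
  by (simp_all add: plus_nv_def zero_nv_def) (cases y; simp)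

datatype 'a M = Mk "'a \<Rightarrow> nv" nat

instantiation M :: (type) comm_monoid_add begin
definition "0 = Mk (\<lambda>_. Z) 0"
fun plus_M where "plus_M (Mk f n) (Mk g m) = Mk (\<lambda>a. f a + g a) (n + m)"
instance
proof
  fix a b c :: "'a M"
  show "a + b + c = a + (b + c)" by (cases a; cases b; cases c) (simp add: add.assoc)
  show "a + b = b + a" by (cases a; cases b) (simp add: add.commute)
  show "0 + a = a" by (cases a) (simp add: zero_M_def)
qed
end

fun mf :: "'a M \<Rightarrow> 'a \<Rightarrow> nv" where "mf (Mk f n) = f"
fun mn :: "'a M \<Rightarrow> nat" where "mn (Mk f n) = n"

lemma mf_add[simp]: "mf (x + y) a = mf x a + mf y a" by (cases x; cases y) simp
lemma mn_add[simp]: "mn (x + y) = mn x + mn y" by (cases x; cases y) simp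
lemma mf0[simp]: "mf 0 a = Z" "mn 0 = 0" by (simp_all add: zero_M_def)

definition Bt :: "'a M set" where "Bt = {x. (\<exists>a. mf x a = Bad) \<or> 2 \<le> mn x}"
definition orth :: "'a M set \<Rightarrow> 'a M set" where "orth X = {y. \<forall>x\<in>X. x + y \<in> Bt}"
definition psum :: "'a M set \<Rightarrow> 'a M set \<Rightarrow> 'a M set" where
  "psum X Y = {x + y | x y. x \<in> X \<and> y \<in> Y}"
definition isfact :: "'a M set \<Rightarrow> bool" where "isfact X \<longleftrightarrow> orth (orth X) = X"

lemma Bt_ideal: "x \<in> Bt \<Longrightarrow> x + y \<in> Bt"
  by (auto simp: Bt_def) (metis nv_simps(1))

lemma Bt_ideal2: "y \<in> Bt \<Longrightarrow> x + y \<in> Bt"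
  using Bt_ideal[of y x] by (simp add: add.commute)

lemma orth_anti: "X \<subseteq> Y \<Longrightarrow> orth Y \<subseteq> orth X"
  by (auto simp: orth_def)

lemma orth_ext: "X \<subseteq> orth (orth X)"
  by (auto simp: orth_def add.commute)

lemma orth3: "orth (orth (orth X)) = orth X"
  by (meson orth_anti orth_ext subset_antisym)

lemma fact_orth[simp]: "isfact (orth X)"
  by (simp add: isfact_def orth3)

lemma orth_swap: "X \<subseteq> orth Y \<longleftrightarrow> Y \<subseteq> orth X"
  unfolding orth_def subset_iff mem_Collect_eq by (metis add.commute)

lemma orth_Un: "orth (X \<union> Y) = orth X \<inter> orth Y"
  by (auto simp: orth_def)

lemma orth_Union: "orth (\<Union> S) = (\<Inter>X\<in>S. orth X)"
  by (auto simp: orth_def)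

lemma fact_Inter: "\<forall>X\<in>S. isfact X \<Longrightarrow> isfact (\<Inter> S)"
proof -
  assume a: "\<forall>X\<in>S. isfact X"
  have "\<Inter> S = (\<Inter>X\<in>S. orth (orth X))" using a by (auto simp: isfact_def)
  also have "\<dots> = orth (\<Union>X\<in>S. orth X)" by (auto simp: orth_def)
  finally show ?thesis by simp
qed

lemma fact_Int: "isfact X \<Longrightarrow> isfact Y \<Longrightarrow> isfact (X \<inter> Y)"
  using fact_Inter[of "{X,Y}"] by auto

lemma fact_UNIV[simp]: "isfact UNIV"
  using fact_Inter[of "{}"] by simp

lemma Bt_fact: "Bt = orth {0}"
  by (simp add: orth_def)

lemma Bt_sub_fact: "isfact X \<Longrightarrow> Bt \<subseteq> X"
proof -
  assume "isfact X"
  hence "X = orth (orth X)" by (simp add: isfact_def)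
  moreover have "Bt \<subseteq> orth (orth X)" unfolding orth_def using Bt_ideal2 by blast
  ultimately show ?thesis by simp
qed

lemma psum_mono: "X \<subseteq> X' \<Longrightarrow> Y \<subseteq> Y' \<Longrightarrow> psum X Y \<subseteq> psum X' Y'"
  unfolding psum_def by blast

lemma psum_memI: "x \<in> X \<Longrightarrow> y \<in> Y \<Longrightarrow> x + y \<in> psum X Y"
  unfolding psum_def by blast

lemma psum_memE: "z \<in> psum X Y \<Longrightarrow> (\<And>x y. z = x + y \<Longrightarrow> x \<in> X \<Longrightarrow> y \<in> Y \<Longrightarrow> P) \<Longrightarrow> P"
  unfolding psum_def by blast

lemma psum_comm_sub: "psum X Y \<subseteq> psum Y X"
proof
  fix z assume "z \<in> psum X Y"
  then obtain x y where "z = x + y" "x \<in> X" "y \<in> Y" by (rule psum_memE)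
  moreover have "x + y = y + x" by (simp add: add.commute)
  ultimately show "z \<in> psum Y X" using psum_memI by metis
qed

lemma psum_comm: "psum X Y = psum Y X"
  by (rule equalityI) (rule psum_comm_sub)+

lemma psum_assoc: "psum (psum X Y) W = psum X (psum Y W)"
proof (rule set_eqI, rule iffI)
  fix z assume "z \<in> psum (psum X Y) W"
  then obtain u w where zu: "z = u + w" and u: "u \<in> psum X Y" and w: "w \<in> W" by (rule psum_memE)
  obtain x y where ux: "u = x + y" and x: "x \<in> X" and y: "y \<in> Y" using u by (rule psum_memE)
  have "z = x + (y + w)" using zu ux by (simp add: add.assoc)
  moreover have "y + w \<in> psum Y W" using y w by (rule psum_memI)
  ultimately show "z \<in> psum X (psum Y W)" using x psum_memI by blast
next
  fix z assume "z \<in> psum X (psum Y W)"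
  then obtain x u where zu: "z = x + u" and x: "x \<in> X" and u: "u \<in> psum Y W" by (rule psum_memE)
  obtain y w where uy: "u = y + w" and y: "y \<in> Y" and w: "w \<in> W" using u by (rule psum_memE)
  have "z = (x + y) + w" using zu uy by (simp add: add.assoc)
  moreover have "x + y \<in> psum X Y" using x y by (rule psum_memI)
  ultimately show "z \<in> psum (psum X Y) W" using w psum_memI by blast
qed

lemma psum_zero[simp]: "psum X {0} = X" "psum {0} X = X"
  unfolding psum_def by auto

lemma psum_single[simp]: "psum {a} {b} = {a + b}"
  unfolding psum_def by blast

lemma psum_sub_Bt: "psum X Y \<subseteq> Bt \<longleftrightarrow> Y \<subseteq> orth X"
  unfolding psum_def orth_def subset_iff mem_Collect_eq by blast

lemma orth_psum_cl: "orth (psum (orth (orth X)) Y) = orth (psum X Y)"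
proof
  show "orth (psum (orth (orth X)) Y) \<subseteq> orth (psum X Y)"
    by (intro orth_anti psum_mono orth_ext) auto
next
  show "orth (psum X Y) \<subseteq> orth (psum (orth (orth X)) Y)"
  proof
    fix z assume z: "z \<in> orth (psum X Y)"
    have "\<forall>u\<in>psum (orth (orth X)) Y. u + z \<in> Bt"
    proof
      fix u assume "u \<in> psum (orth (orth X)) Y"
      then obtain x y where u: "u = x + y" and x: "x \<in> orth (orth X)" and y: "y \<in> Y"
        by (rule psum_memE)
      have "y + z \<in> orth X" unfolding orth_def mem_Collect_eq
      proof (intro ballI)
        fix x' assume "x' \<in> X"
        hence "x' + y \<in> psum X Y" using y by (rule psum_memI)
        hence "(x' + y) + z \<in> Bt" using z by (simp add: orth_def)
        thus "x' + (y + z) \<in> Bt" by (simp add: add.assoc)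
      qed
      hence "(y + z) + x \<in> Bt" using x unfolding orth_def by blast
      thus "u + z \<in> Bt" using u by (simp add: ac_simps)
    qed
    thus "z \<in> orth (psum (orth (orth X)) Y)" unfolding orth_def by blast
  qed
qed

lemma orth_psum_cl2: "orth (psum Y (orth (orth X))) = orth (psum Y X)"
  using orth_psum_cl[of X Y] by (simp add: psum_comm)

lemma closure_into_fact:
  assumes "isfact W" "\<forall>x\<in>S. c + x \<in> W" "x \<in> orth (orth S)"
  shows "c + x \<in> W"
proof -
  from assms(1) have W: "W = orth (orth W)" by (simp add: isfact_def)
  have "\<forall>z\<in>orth W. z + c \<in> orth S"
  proof (intro ballI)
    fix z assume z: "z \<in> orth W"
    show "z + c \<in> orth S" unfolding orth_def mem_Collect_eq
    proof (intro ballI)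
      fix x' assume "x' \<in> S"
      hence "c + x' \<in> W" using assms(2) by blast
      hence "(c + x') + z \<in> Bt" using z by (simp add: orth_def)
      thus "x' + (z + c) \<in> Bt" by (simp add: ac_simps)
    qed
  qed
  hence "\<forall>z\<in>orth W. (z + c) + x \<in> Bt" using assms(3) unfolding orth_def
    by blast
  hence "\<forall>z\<in>orth W. z + (c + x) \<in> Bt" by (simp add: add.assoc)
  hence "c + x \<in> orth (orth W)" unfolding orth_def by blast
  with W show ?thesis by simp
qed


section \<open>Semantics\<close>

definition ins :: "nat \<Rightarrow> 'b \<Rightarrow> (nat \<Rightarrow> 'b) \<Rightarrow> nat \<Rightarrow> 'b" where
  "ins k X \<rho> = (\<lambda>i. if i < k then \<rho> i else if i = k then X else \<rho> (i - 1))"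

definition gen :: "'a \<Rightarrow> bool \<Rightarrow> 'a M" where
  "gen a b = Mk (\<lambda>x. if x = a then (if b then PT 0 else PF 0) else Z) 0"

primrec sem :: "(nat \<Rightarrow> 'a M set) \<Rightarrow> 'a form \<Rightarrow> 'a M set" where
  "sem \<rho> (Atom a) = orth (orth {gen a True})"
| "sem \<rho> (NAtom a) = orth {gen a True}"
| "sem \<rho> One = orth (orth {0})"
| "sem \<rho> Bot = orth {0}"
| "sem \<rho> Top = UNIV"
| "sem \<rho> Zero = orth UNIV"
| "sem \<rho> (Tensor A B) = orth (orth (psum (sem \<rho> A) (sem \<rho> B)))"
| "sem \<rho> (Par A B) = orth (psum (orth (sem \<rho> A)) (orth (sem \<rho> B)))"
| "sem \<rho> (With A B) = sem \<rho> A \<inter> sem \<rho> B"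
| "sem \<rho> (Plus A B) = orth (orth (sem \<rho> A \<union> sem \<rho> B))"
| "sem \<rho> (Mu B) = \<Inter> {X. isfact X \<and> sem (ins 0 X \<rho>) B \<subseteq> X}"
| "sem \<rho> (Nu B) = orth (orth (\<Union> {X. isfact X \<and> X \<subseteq> sem (ins 0 X \<rho>) B}))"
| "sem \<rho> (Var i) = \<rho> i"

definition fenv :: "(nat \<Rightarrow> 'a M set) \<Rightarrow> bool" where "fenv \<rho> \<longleftrightarrow> (\<forall>i. isfact (\<rho> i))"

lemma ins_mono: "(\<forall>i. \<rho> i \<subseteq> \<rho>' i) \<Longrightarrow> \<forall>i. ins k X \<rho> i \<subseteq> ins k X \<rho>' i"
  by (simp add: ins_def)

lemma sem_mono: "(\<forall>i. \<rho> i \<subseteq> \<rho>' i) \<Longrightarrow> sem \<rho> A \<subseteq> sem \<rho>' A"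
proof (induction A arbitrary: \<rho> \<rho>')
  case (Tensor A B)
  have "sem \<rho> A \<subseteq> sem \<rho>' A" "sem \<rho> B \<subseteq> sem \<rho>' B" using Tensor by blast+
  hence "psum (sem \<rho> A) (sem \<rho> B) \<subseteq> psum (sem \<rho>' A) (sem \<rho>' B)" by (rule psum_mono)
  thus ?case by (simp add: orth_anti)
next
  case (Par A B)
  have "sem \<rho> A \<subseteq> sem \<rho>' A" "sem \<rho> B \<subseteq> sem \<rho>' B" using Par by blast+
  hence "psum (orth (sem \<rho>' A)) (orth (sem \<rho>' B)) \<subseteq> psum (orth (sem \<rho> A)) (orth (sem \<rho> B))"
    by (intro psum_mono orth_anti)
  thus ?case by (simp add: orth_anti)
next
  case (With A B)
  have "sem \<rho> A \<subseteq> sem \<rho>' A" "sem \<rho> B \<subseteq> sem \<rho>' B" using With by blast+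
  thus ?case by auto
next
  case (Plus A B)
  have "sem \<rho> A \<subseteq> sem \<rho>' A" "sem \<rho> B \<subseteq> sem \<rho>' B" using Plus by blast+
  hence "sem \<rho> A \<union> sem \<rho> B \<subseteq> sem \<rho>' A \<union> sem \<rho>' B" by blast
  thus ?case by (simp add: orth_anti)
next
  case (Mu B)
  have "\<And>X. sem (ins 0 X \<rho>) B \<subseteq> sem (ins 0 X \<rho>') B"
  proof -
    fix X
    have "\<forall>i. ins 0 X \<rho> i \<subseteq> ins 0 X \<rho>' i" using Mu.prems by (rule ins_mono)
    thus "sem (ins 0 X \<rho>) B \<subseteq> sem (ins 0 X \<rho>') B" by (rule Mu.IH)
  qed
  hence "{X. isfact X \<and> sem (ins 0 X \<rho>') B \<subseteq> X} \<subseteq> {X. isfact X \<and> sem (ins 0 X \<rho>) B \<subseteq> X}"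
    by blast
  thus ?case by (simp add: Inter_anti_mono)
next
  case (Nu B)
  have "\<And>X. sem (ins 0 X \<rho>) B \<subseteq> sem (ins 0 X \<rho>') B"
  proof -
    fix X
    have "\<forall>i. ins 0 X \<rho> i \<subseteq> ins 0 X \<rho>' i" using Nu.prems by (rule ins_mono)
    thus "sem (ins 0 X \<rho>) B \<subseteq> sem (ins 0 X \<rho>') B" by (rule Nu.IH)
  qed
  hence "\<Union> {X. isfact X \<and> X \<subseteq> sem (ins 0 X \<rho>) B} \<subseteq> \<Union> {X. isfact X \<and> X \<subseteq> sem (ins 0 X \<rho>') B}"
    by blast
  thus ?case by (simp add: orth_anti)
next
  case (Var i) thus ?case by simp
qed simp_all

lemma fenv_ins: "fenv \<rho> \<Longrightarrow> isfact X \<Longrightarrow> fenv (ins k X \<rho>)"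
  by (simp add: fenv_def ins_def)

lemma sem_fact: "fenv \<rho> \<Longrightarrow> isfact (sem \<rho> A)"
proof (induction A arbitrary: \<rho>)
  case (With A B) thus ?case by (simp add: fact_Int)
next
  case (Mu B) thus ?case by (simp add: fact_Inter)
next
  case (Var i) thus ?case by (simp add: fenv_def)
qed auto

lemma fact_eq: "isfact X \<Longrightarrow> orth (orth X) = X" by (simp add: isfact_def)

lemma ins_Suc_0: "ins (Suc k) Y (ins 0 X \<rho>) = ins 0 X (ins k Y \<rho>)"
  unfolding ins_def by (rule ext) (auto split: if_splits)

lemma sem_lift: "sem (ins k X \<rho>) (lift k A) = sem \<rho> A"
proof (induction A arbitrary: k \<rho>)
  case (Mu B) thus ?case by (simp add: ins_Suc_0[symmetric])
next
  case (Nu B) thus ?case by (simp add: ins_Suc_0[symmetric])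
next
  case (Var i) thus ?case by (simp add: ins_def)
qed auto

lemma sem_subst: "sem \<rho> (subst k t A) = sem (ins k (sem \<rho> t) \<rho>) A"
proof (induction A arbitrary: k t \<rho>)
  case (Mu B)
  have "\<And>X. sem (ins 0 X \<rho>) (subst (Suc k) (lift 0 t) B) = sem (ins 0 X (ins k (sem \<rho> t) \<rho>)) B"
    using Mu.IH by (simp add: sem_lift ins_Suc_0)
  thus ?case by simp
next
  case (Nu B)
  have "\<And>X. sem (ins 0 X \<rho>) (subst (Suc k) (lift 0 t) B) = sem (ins 0 X (ins k (sem \<rho> t) \<rho>)) B"
    using Nu.IH by (simp add: sem_lift ins_Suc_0)
  thus ?case by simp
next
  case (Var i) thus ?case by (simp add: ins_def)
qed auto


lemma orth_sub_fact_iff: "isfact X \<Longrightarrow> isfact W \<Longrightarrow> orth W \<subseteq> X \<longleftrightarrow> orth X \<subseteq> W"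
  by (metis fact_eq orth_anti)

lemma ins0_orth: "isfact X \<Longrightarrow> ins 0 X (orth \<circ> \<rho>) = orth \<circ> ins 0 (orth X) \<rho>"
  by (rule ext) (simp add: ins_def fact_eq)

lemma sem_dual: "fenv \<rho> \<Longrightarrow> sem (orth \<circ> \<rho>) (dual A) = orth (sem \<rho> A)"
proof (induction A arbitrary: \<rho>)
  case (Atom a) show ?case by (simp add: orth3)
next
  case (NAtom a) show ?case by simp
next
  case One show ?case by (simp add: orth3)
next
  case Bot show ?case by simp
next
  case Top show ?case by simp
next
  case Zero have "orth (orth UNIV) = (UNIV :: 'a M set)" by (rule fact_eq, rule fact_UNIV)
  thus ?case by simp
next
  case (Tensor A B)
  have fA: "isfact (sem \<rho> A)" and fB: "isfact (sem \<rho> B)" using Tensor.prems sem_fact by blast+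
  show ?case using Tensor by (simp add: orth3 fact_eq fA fB)
next
  case (Par A B)
  have fA: "isfact (sem \<rho> A)" and fB: "isfact (sem \<rho> B)" using Par.prems sem_fact by blast+
  show ?case using Par fA fB by (simp add: fact_eq)
next
  case (With A B)
  have fA: "isfact (sem \<rho> A)" and fB: "isfact (sem \<rho> B)" using With.prems sem_fact by blast+
  have "orth (sem \<rho> A \<inter> sem \<rho> B) = orth (orth (orth (sem \<rho> A)) \<inter> orth (orth (sem \<rho> B)))"
    using fA fB by (simp add: fact_eq)
  also have "\<dots> = orth (orth (orth (sem \<rho> A) \<union> orth (sem \<rho> B)))" by (simp add: orth_Un)
  finally show ?case using With by simp
next
  case (Plus A B)
  have fA: "isfact (sem \<rho> A)" and fB: "isfact (sem \<rho> B)" using Plus.prems sem_fact by blast+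
  have "orth (sem \<rho> (Plus A B)) = orth (sem \<rho> A) \<inter> orth (sem \<rho> B)"
    by (simp only: sem.simps orth3) (rule orth_Un)
  thus ?case using Plus.IH Plus.prems by simp
next
  case (Mu B)
  let ?P = "{X. isfact X \<and> X \<subseteq> sem (ins 0 X (orth \<circ> \<rho>)) (dual B)}"
  let ?Q = "{Y. isfact Y \<and> sem (ins 0 Y \<rho>) B \<subseteq> Y}"
  have key: "\<And>X. isfact X \<Longrightarrow> sem (ins 0 X (orth \<circ> \<rho>)) (dual B) = orth (sem (ins 0 (orth X) \<rho>) B)"
  proof -
    fix X :: "'a M set" assume fX: "isfact X"
    have "sem (ins 0 X (orth \<circ> \<rho>)) (dual B) = sem (orth \<circ> ins 0 (orth X) \<rho>) (dual B)"
      by (simp only: ins0_orth[OF fX])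
    also have "\<dots> = orth (sem (ins 0 (orth X) \<rho>) B)"
      using Mu.IH fenv_ins[OF Mu.prems fact_orth] by (simp add: comp_def)
    finally show "sem (ins 0 X (orth \<circ> \<rho>)) (dual B) = orth (sem (ins 0 (orth X) \<rho>) B)" .
  qed
  have "?P = orth ` ?Q"
  proof
    show "?P \<subseteq> orth ` ?Q"
    proof
      fix X assume X: "X \<in> ?P"
      hence fX: "isfact X" by simp
      have "X \<subseteq> orth (sem (ins 0 (orth X) \<rho>) B)" using X key[OF fX] by simp
      hence "sem (ins 0 (orth X) \<rho>) B \<subseteq> orth X" by (simp add: orth_swap)
      hence "orth X \<in> ?Q" by simp
      moreover have "X = orth (orth X)" using fX by (simp add: fact_eq)
      ultimately show "X \<in> orth ` ?Q" by blast
    qed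
  next
    show "orth ` ?Q \<subseteq> ?P"
    proof
      fix X assume "X \<in> orth ` ?Q"
      then obtain Y where Y: "Y \<in> ?Q" and XY: "X = orth Y" by blast
      have fY: "isfact Y" using Y by simp
      have oX: "orth X = Y" using XY fY by (simp add: fact_eq)
      have "sem (ins 0 (orth X) \<rho>) B \<subseteq> orth X" using Y oX by simp
      hence "X \<subseteq> orth (sem (ins 0 (orth X) \<rho>) B)" by (simp add: orth_swap)
      moreover have fX: "isfact X" using XY by simp
      ultimately show "X \<in> ?P" using key[OF fX] by simp
    qed
  qed
  hence "sem (orth \<circ> \<rho>) (dual (Mu B)) = orth (orth (\<Union> (orth ` ?Q)))" by simp
  also have "\<dots> = orth (\<Inter>Y\<in>?Q. orth (orth Y))" by (simp add: orth_Union)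
  also have "(\<Inter>Y\<in>?Q. orth (orth Y)) = \<Inter> ?Q" by (auto simp: fact_eq)
  finally show ?case by simp
next
  case (Nu B)
  let ?P = "{X. isfact X \<and> sem (ins 0 X (orth \<circ> \<rho>)) (dual B) \<subseteq> X}"
  let ?Q = "{Y. isfact Y \<and> Y \<subseteq> sem (ins 0 Y \<rho>) B}"
  have key: "\<And>X. isfact X \<Longrightarrow> sem (ins 0 X (orth \<circ> \<rho>)) (dual B) = orth (sem (ins 0 (orth X) \<rho>) B)"
  proof -
    fix X :: "'a M set" assume fX: "isfact X"
    have "sem (ins 0 X (orth \<circ> \<rho>)) (dual B) = sem (orth \<circ> ins 0 (orth X) \<rho>) (dual B)"
      by (simp only: ins0_orth[OF fX])
    also have "\<dots> = orth (sem (ins 0 (orth X) \<rho>) B)"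
      using Nu.IH fenv_ins[OF Nu.prems fact_orth] by (simp add: comp_def)
    finally show "sem (ins 0 X (orth \<circ> \<rho>)) (dual B) = orth (sem (ins 0 (orth X) \<rho>) B)" .
  qed
  have fW: "\<And>X. isfact X \<Longrightarrow> isfact (sem (ins 0 X \<rho>) B)"
    using Nu.prems by (simp add: sem_fact fenv_ins)
  have "?P = orth ` ?Q"
  proof
    show "?P \<subseteq> orth ` ?Q"
    proof
      fix X assume X: "X \<in> ?P"
      hence fX: "isfact X" by simp
      have "orth (sem (ins 0 (orth X) \<rho>) B) \<subseteq> X" using X key[OF fX] by simp
      hence "orth X \<subseteq> sem (ins 0 (orth X) \<rho>) B" using orth_sub_fact_iff[OF fX fW[of "orth X"]] by simp
      hence "orth X \<in> ?Q" by simp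
      moreover have "X = orth (orth X)" using fX by (simp add: fact_eq)
      ultimately show "X \<in> orth ` ?Q" by blast
    qed
  next
    show "orth ` ?Q \<subseteq> ?P"
    proof
      fix X assume "X \<in> orth ` ?Q"
      then obtain Y where Y: "Y \<in> ?Q" and XY: "X = orth Y" by blast
      have fY: "isfact Y" using Y by simp
      have oX: "orth X = Y" using XY fY by (simp add: fact_eq)
      have "orth X \<subseteq> sem (ins 0 (orth X) \<rho>) B" using Y oX by simp
      hence "orth (sem (ins 0 (orth X) \<rho>) B) \<subseteq> X" using orth_sub_fact_iff[OF _ fW[of "orth X"]] XY by simp
      moreover have fX: "isfact X" using XY by simp
      ultimately show "X \<in> ?P" using key[OF fX] by simp
    qed
  qed
  hence "sem (orth \<circ> \<rho>) (dual (Nu B)) = \<Inter> (orth ` ?Q)" by simp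
  also have "\<dots> = orth (\<Union> ?Q)" by (simp add: orth_Union)
  also have "\<dots> = orth (sem \<rho> (Nu B))" by (simp add: orth3)
  finally show ?case .
next
  case (Var i) show ?case by simp
qed


lemma ins0_sub: "L \<subseteq> X \<Longrightarrow> \<forall>i. ins 0 L \<rho> i \<subseteq> ins 0 X \<rho> i"
  by (simp add: ins_def)

lemma mu_unfold: "sem (ins 0 (sem \<rho> (Mu B)) \<rho>) B \<subseteq> sem \<rho> (Mu B)"
proof -
  let ?L = "sem \<rho> (Mu B)"
  have "\<And>X. isfact X \<Longrightarrow> sem (ins 0 X \<rho>) B \<subseteq> X \<Longrightarrow> sem (ins 0 ?L \<rho>) B \<subseteq> X"
  proof -
    fix X assume X: "isfact X" "sem (ins 0 X \<rho>) B \<subseteq> X"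
    hence "?L \<subseteq> X" by auto
    hence "sem (ins 0 ?L \<rho>) B \<subseteq> sem (ins 0 X \<rho>) B" by (intro sem_mono ins0_sub)
    thus "sem (ins 0 ?L \<rho>) B \<subseteq> X" using X by blast
  qed
  thus ?thesis by (simp only: sem.simps) (rule Inter_greatest, blast)
qed

lemma nu_coind: "isfact X \<Longrightarrow> X \<subseteq> sem (ins 0 X \<rho>) B \<Longrightarrow> X \<subseteq> sem \<rho> (Nu B)"
proof -
  assume "isfact X" "X \<subseteq> sem (ins 0 X \<rho>) B"
  hence "X \<subseteq> \<Union> {X. isfact X \<and> X \<subseteq> sem (ins 0 X \<rho>) B}" by blast
  also have "\<dots> \<subseteq> sem \<rho> (Nu B)" by (simp add: orth_ext)
  finally show ?thesis .
qed

definition Dself :: "'a M set" where "Dself = {x. (\<exists>a. mf x a = Bad) \<or> 1 \<le> mn x}"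

lemma Dself_orth: "orth Dself = (Dself :: 'a M set)"
proof
  show "orth Dself \<subseteq> (Dself :: 'a M set)"
  proof
    fix y :: "'a M" assume y: "y \<in> orth Dself"
    have "Mk (\<lambda>_. Z) 1 \<in> Dself" by (simp add: Dself_def)
    hence "Mk (\<lambda>_. Z) 1 + y \<in> Bt" using y unfolding orth_def by blast
    thus "y \<in> Dself" by (cases y) (auto simp: Bt_def Dself_def zero_M_def)
  qed
next
  show "(Dself :: 'a M set) \<subseteq> orth Dself"
  proof
    fix y :: "'a M" assume y: "y \<in> Dself"
    show "y \<in> orth Dself" unfolding orth_def mem_Collect_eq
    proof
      fix x :: "'a M" assume x: "x \<in> Dself"
      show "x + y \<in> Bt" using x y by (cases x; cases y) (auto simp: Bt_def Dself_def, (metis nv_simps(1,2))+)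
    qed
  qed
qed

definition rho0 :: "nat \<Rightarrow> 'a M set" where "rho0 = (\<lambda>_. Dself)"

lemma fenv_rho0: "fenv rho0"
  unfolding fenv_def rho0_def isfact_def by (simp add: Dself_orth)

lemma orth_rho0: "orth \<circ> rho0 = rho0"
  by (rule ext) (simp add: rho0_def Dself_orth)

lemma sem_dual0: "sem rho0 (dual A) = orth (sem rho0 A)"
  using sem_dual[OF fenv_rho0, of A] by (simp add: orth_rho0)

lemma fact0: "isfact (sem rho0 A)"
  by (rule sem_fact[OF fenv_rho0])

definition tfun :: "'a form \<Rightarrow> 'a M set \<Rightarrow> 'a M set" where
  "tfun A S = psum (orth (sem rho0 A)) S"

lemma psum_lcomm: "psum X (psum Y S) = psum Y (psum X S)"
proof -
  have "psum X (psum Y S) = psum (psum X Y) S" by (simp only: psum_assoc)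
  also have "\<dots> = psum (psum Y X) S" by (simp only: psum_comm[of X Y])
  also have "\<dots> = psum Y (psum X S)" by (simp only: psum_assoc)
  finally show ?thesis .
qed

lemma cfc: "comp_fun_commute tfun"
  unfolding comp_fun_commute_def tfun_def
  by (intro allI ext, simp only: comp_def, rule psum_lcomm)

definition tst :: "'a form multiset \<Rightarrow> 'a M set" where
  "tst \<Gamma> = fold_mset tfun {0} \<Gamma>"

lemma tst_empty[simp]: "tst {#} = {0}"
  by (simp add: tst_def)

lemma tst_add: "tst (add_mset A \<Gamma>) = psum (orth (sem rho0 A)) (tst \<Gamma>)"
  by (simp add: tst_def comp_fun_commute.fold_mset_add_mset[OF cfc] tfun_def)

lemma tst_union: "tst (\<Gamma> + \<Delta>) = psum (tst \<Gamma>) (tst \<Delta>)"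
proof (induction \<Delta>)
  case empty thus ?case by simp
next
  case (add x \<Delta>)
  have "tst (\<Gamma> + add_mset x \<Delta>) = psum (orth (sem rho0 x)) (psum (tst \<Gamma>) (tst \<Delta>))"
    using add by (simp add: tst_add)
  also have "\<dots> = psum (tst \<Gamma>) (psum (orth (sem rho0 x)) (tst \<Delta>))"
    by (rule psum_lcomm)
  finally show ?case by (simp add: tst_add)
qed

lemma tst_add_iff: "tst (add_mset A \<Gamma>) \<subseteq> Bt \<longleftrightarrow> tst \<Gamma> \<subseteq> sem rho0 A"
  using fact0[of A] by (simp add: psum_sub_Bt fact_eq tst_add)

lemma soundness: "prov \<Gamma> \<Longrightarrow> tst \<Gamma> \<subseteq> Bt"
proof (induction rule: prov.induct)
  case (init a)
  show ?case by (simp add: psum_sub_Bt orth3 tst_add)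
next
  case (cut A \<Gamma> \<Delta>)
  have "tst \<Gamma> \<subseteq> sem rho0 A" "tst \<Delta> \<subseteq> orth (sem rho0 A)"
    using cut by (simp_all add: tst_add_iff sem_dual0)
  hence "tst \<Delta> \<subseteq> orth (tst \<Gamma>)" using orth_anti by blast
  thus ?case by (simp add: tst_union psum_sub_Bt)
next
  case one
  show ?case unfolding tst_add tst_empty psum_zero sem.simps orth3 unfolding Bt_fact[symmetric] by (rule subset_refl)
next
  case (bot \<Gamma>)
  thus ?case by (simp add: tst_add_iff Bt_fact[symmetric])
next
  case (top \<Gamma>)
  show ?case by (simp add: tst_add_iff)
next
  case (tensor A \<Gamma> B \<Delta>)
  have "tst \<Gamma> \<subseteq> sem rho0 A" "tst \<Delta> \<subseteq> sem rho0 B" using tensor by (simp_all add: tst_add_iff)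
  hence "psum (tst \<Gamma>) (tst \<Delta>) \<subseteq> psum (sem rho0 A) (sem rho0 B)" by (rule psum_mono)
  also have "\<dots> \<subseteq> sem rho0 (Tensor A B)" by (simp add: orth_ext)
  finally show ?case by (simp add: tst_add_iff tst_union)
next
  case (par A B \<Gamma>)
  have "psum (orth (sem rho0 A)) (psum (orth (sem rho0 B)) (tst \<Gamma>)) \<subseteq> Bt" using par by (simp add: tst_add)
  hence "psum (psum (orth (sem rho0 A)) (orth (sem rho0 B))) (tst \<Gamma>) \<subseteq> Bt" by (simp add: psum_assoc)
  thus ?case by (simp add: tst_add_iff psum_sub_Bt)
next
  case (with_r A \<Gamma> B)
  thus ?case by (simp add: tst_add_iff)
next
  case (plus1 A \<Gamma> B)
  hence "tst \<Gamma> \<subseteq> sem rho0 A" by (simp add: tst_add_iff)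
  also have "\<dots> \<subseteq> orth (orth (sem rho0 A \<union> sem rho0 B))" using orth_ext by blast
  finally show ?case by (simp add: tst_add_iff)
next
  case (plus2 B \<Gamma> A)
  hence "tst \<Gamma> \<subseteq> sem rho0 B" by (simp add: tst_add_iff)
  also have "\<dots> \<subseteq> orth (orth (sem rho0 A \<union> sem rho0 B))" using orth_ext by blast
  finally show ?case by (simp add: tst_add_iff)
next
  case (mu B \<Gamma>)
  hence "tst \<Gamma> \<subseteq> sem rho0 (subst 0 (Mu B) B)" by (simp add: tst_add_iff)
  also have "\<dots> \<subseteq> sem rho0 (Mu B)" by (simp only: sem_subst mu_unfold)
  finally show ?case by (simp add: tst_add_iff)
next
  case (nu S \<Gamma> B)
  have "tst \<Gamma> \<subseteq> sem rho0 S" using nu by (simp add: tst_add_iff)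
  have "tst {# subst 0 S B #} \<subseteq> sem rho0 (dual S)" using nu(4) by (simp add: tst_add_iff)
  hence "orth (sem rho0 (subst 0 S B)) \<subseteq> orth (sem rho0 S)" by (simp add: sem_dual0 tst_add)
  hence "orth (orth (sem rho0 S)) \<subseteq> orth (orth (sem rho0 (subst 0 S B)))" by (rule orth_anti)
  moreover have fI: "isfact (sem (ins 0 (sem rho0 S) rho0) B)" by (rule sem_fact[OF fenv_ins[OF fenv_rho0 fact0]])
  ultimately have "sem rho0 S \<subseteq> sem (ins 0 (sem rho0 S) rho0) B"
    by (simp add: fact_eq[OF fact0] sem_subst fact_eq[OF fI])
  hence "sem rho0 S \<subseteq> sem rho0 (Nu B)" by (rule nu_coind[OF fact0])
  with \<open>tst \<Gamma> \<subseteq> sem rho0 S\<close> show ?case by (simp add: tst_add_iff)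
qed




lemma orthI: "(\<And>x. x \<in> X \<Longrightarrow> x + y \<in> Bt) \<Longrightarrow> y \<in> orth X"
  by (simp add: orth_def)

lemma orthD: "y \<in> orth X \<Longrightarrow> x \<in> X \<Longrightarrow> x + y \<in> Bt"
  by (simp add: orth_def)

lemma nv_pol: "PT 0 + v = Bad \<Longrightarrow> PF 0 + w = Bad \<Longrightarrow> w + v = Bad"
  by (cases v; cases w; simp add: plus_nv_def)

lemma gen_TF_Bt: "gen a False + gen a True \<in> Bt"
  by (auto simp: gen_def Bt_def plus_nv_def)

lemma pol: "orth {gen a True} = orth (orth {gen a False})"
proof
  have "gen a True \<in> orth {gen a False}" using gen_TF_Bt by (simp add: orth_def)
  hence "{gen a True} \<subseteq> orth {gen a False}" by simp
  thus "orth (orth {gen a False}) \<subseteq> orth {gen a True}" by (rule orth_anti)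
next
  show "orth {gen a True} \<subseteq> orth (orth {gen a False})"
  proof
    fix y :: "'a M" assume y: "y \<in> orth {gen a True}"
    hence y': "gen a True + y \<in> Bt" by (simp add: orth_def)
    show "y \<in> orth (orth {gen a False})"
    proof (rule orthI)
      fix x :: "'a M" assume x: "x \<in> orth {gen a False}"
      hence x': "gen a False + x \<in> Bt" by (simp add: orth_def)
      obtain fx nx where X: "x = Mk fx nx" by (cases x)
      obtain fy ny where Y: "y = Mk fy ny" by (cases y)
      have y2: "PT 0 + fy a = Bad \<or> (\<exists>b. fy b = Bad) \<or> 2 \<le> ny"
        using y' by (auto simp: Y gen_def Bt_def split: if_splits)
      have x2: "PF 0 + fx a = Bad \<or> (\<exists>b. fx b = Bad) \<or> 2 \<le> nx"
        using x' by (auto simp: X gen_def Bt_def split: if_splits)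
      have "(\<exists>b. fx b + fy b = Bad) \<or> 2 \<le> nx + ny"
      proof -
        { assume "\<exists>b. fy b = Bad" then obtain b where "fy b = Bad" by blast
          hence "fx b + fy b = Bad" by simp
          hence ?thesis by blast }
        moreover
        { assume "\<exists>b. fx b = Bad" then obtain b where "fx b = Bad" by blast
          hence "fx b + fy b = Bad" by simp
          hence ?thesis by blast }
        moreover
        { assume "PT 0 + fy a = Bad" "PF 0 + fx a = Bad"
          hence "fx a + fy a = Bad" by (rule nv_pol)
          hence ?thesis by blast }
        ultimately show ?thesis using x2 y2 by (smt (verit) le_add1 le_add2 order_trans)
      qed
      thus "x + y \<in> Bt" by (simp add: X Y Bt_def)
    qed
  qed
qed

lemma orth_gen: "orth {gen a b} = orth (orth {gen a (\<not> b)})"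
proof (cases b)
  case True thus ?thesis using pol[of a] by simp
next
  case False
  have "orth (orth {gen a True}) = orth (orth (orth {gen a False}))" by (simp only: pol)
  thus ?thesis using False by (simp add: orth3)
qed

lemma sem_lit: "sem \<rho> (lit a b) = orth (orth {gen a b})"
  by (cases b) (simp_all add: lit_def pol)

lemma dual_lit: "dual (lit a b) = lit a (\<not> b)"
  by (cases b) (simp_all add: lit_def)

lemma orth_sem_lit: "orth (sem \<rho> (lit a b)) = orth (orth {gen a (\<not> b)})"
  unfolding sem_lit orth3 by (rule orth_gen)

definition agree :: "'a list \<Rightarrow> 'a state \<Rightarrow> 'a state \<Rightarrow> bool" where
  "agree V s t \<longleftrightarrow> (\<forall>a\<in>set V. s a = t a)"

definition mt :: "'a list \<Rightarrow> 'a state \<Rightarrow> 'a M" where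
  "mt V r = Mk (\<lambda>b. if b \<in> set V then (if r b then PT 0 else PF 0) else Z) 0"

definition ct :: "'a list \<Rightarrow> 'a state \<Rightarrow> 'a M" where
  "ct V r = Mk (\<lambda>b. if b \<in> set V then (if r b then CT else CF) else Z) 0"

lemma sum_gen: "distinct V \<Longrightarrow> sum_list (map (\<lambda>a. gen a (r a)) V) = mt V r"
proof (induction V)
  case Nil thus ?case by (simp add: mt_def zero_M_def)
next
  case (Cons a V)
  thus ?case by (auto simp: mt_def gen_def fun_eq_iff)
qed

definition piV :: "'a list \<Rightarrow> 'a M" where
  "piV V = Mk (\<lambda>b. if b \<in> set V then Pair else Z) 0"

lemma ct_mt_agree: "agree V t r \<Longrightarrow> ct V t + mt V r = piV V"
  by (auto simp: agree_def ct_def mt_def piV_def fun_eq_iff plus_nv_def)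

lemma mt_ct: "mt V r + ct V r = piV V"
  by (auto simp: ct_def mt_def piV_def fun_eq_iff plus_nv_def)

lemma piV_notin: "piV V \<notin> Bt"
  by (simp add: piV_def Bt_def)

lemma ct_mt_Bt: "\<not> agree V t r \<Longrightarrow> ct V t + mt V r \<in> Bt"
  by (auto simp: agree_def ct_def mt_def Bt_def plus_nv_def)

lemma ct_gen_Bt: "a \<in> set V \<Longrightarrow> b \<noteq> t a \<Longrightarrow> ct V t + gen a b \<in> Bt"
  by (cases b) (auto simp: ct_def gen_def Bt_def plus_nv_def)


lemma sem_bigTensor: "(\<forall>x\<in>set xs. sem \<rho> x = orth (orth {g x})) \<Longrightarrow>
  sem \<rho> (bigTensor xs) = orth (orth {sum_list (map g xs)})"
proof (induction xs rule: induct_list012)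
  case 1 thus ?case by simp
next
  case (2 x) thus ?case by simp
next
  case (3 x y zs)
  have "sem \<rho> (bigTensor (y # zs)) = orth (orth {sum_list (map g (y # zs))})"
    using 3 by simp
  moreover have "sem \<rho> x = orth (orth {g x})" using 3 by simp
  ultimately have "sem \<rho> (bigTensor (x # y # zs)) =
    orth (orth (psum (orth (orth {g x})) (orth (orth {sum_list (map g (y # zs))}))))" by simp
  also have "\<dots> = orth (orth {g x + sum_list (map g (y # zs))})"
    by (simp only: orth_psum_cl orth_psum_cl2 psum_single)
  finally show ?case by simp
qed

lemma sem_bigPar: "fenv \<rho> \<Longrightarrow> (\<forall>x\<in>set xs. orth (sem \<rho> x) = orth (orth {g x})) \<Longrightarrow>
  sem \<rho> (bigPar xs) = orth {sum_list (map g xs)}"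
proof (induction xs rule: induct_list012)
  case 1 thus ?case by simp
next
  case (2 x)
  have "sem \<rho> x = orth (orth (sem \<rho> x))" using sem_fact[OF 2(1)] by (simp add: fact_eq)
  also have "\<dots> = orth {g x}" using 2 by (simp add: orth3)
  finally show ?case by simp
next
  case (3 x y zs)
  have "sem \<rho> (bigPar (y # zs)) = orth {sum_list (map g (y # zs))}"
    using 3 by simp
  hence "orth (sem \<rho> (bigPar (y # zs))) = orth (orth {sum_list (map g (y # zs))})" by simp
  moreover have "orth (sem \<rho> x) = orth (orth {g x})" using 3 by simp
  ultimately have "sem \<rho> (bigPar (x # y # zs)) =
    orth (psum (orth (orth {g x})) (orth (orth {sum_list (map g (y # zs))})))" by simp
  also have "\<dots> = orth {g x + sum_list (map g (y # zs))}"
    by (simp only: orth_psum_cl orth_psum_cl2 psum_single)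
  finally show ?case by simp
qed

lemma sem_bigWith: "sem \<rho> (bigWith xs) = (\<Inter>x\<in>set xs. sem \<rho> x)"
  by (induction xs rule: induct_list012) auto

lemma sem_bigPlus: "x \<in> set xs \<Longrightarrow> sem \<rho> x \<subseteq> sem \<rho> (bigPlus xs)"
proof (induction xs rule: induct_list012)
  case 1 thus ?case by simp
next
  case (2 y) thus ?case by simp
next
  case (3 y z zs)
  show ?case
  proof (cases "x = y")
    case True
    thus ?thesis using orth_ext[of "sem \<rho> y \<union> sem \<rho> (bigPlus (z # zs))"] by auto
  next
    case False
    hence "sem \<rho> x \<subseteq> sem \<rho> (bigPlus (z # zs))" using 3 by simp
    thus ?thesis using orth_ext[of "sem \<rho> y \<union> sem \<rho> (bigPlus (z # zs))"] by auto
  qed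
qed

lemma sem_bigPar_elem:
  assumes "fenv \<rho>" "x \<in> set xs" "\<forall>z\<in>orth (sem \<rho> x). c + z \<in> Bt"
  shows "c \<in> sem \<rho> (bigPar xs)"
  using assms(2)
proof (induction xs rule: induct_list012)
  case 1 thus ?case by simp
next
  case (2 y)
  hence "y = x" by simp
  have "c \<in> orth (orth (sem \<rho> x))"
    by (rule orthI) (use assms(3) in \<open>simp add: add.commute\<close>)
  thus ?case using \<open>y = x\<close> sem_fact[OF assms(1)] by (simp add: fact_eq)
next
  case (3 y z zs)
  show ?case
  proof (cases "x = y")
    case True
    show ?thesis unfolding bigop.simps sem.simps
    proof (rule orthI)
      fix u assume "u \<in> psum (orth (sem \<rho> y)) (orth (sem \<rho> (bigPar (z # zs))))"
      then obtain v w where "u = v + w" "v \<in> orth (sem \<rho> x)" by (auto elim: psum_memE simp: True)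
      hence "c + v \<in> Bt" using assms(3) by blast
      hence "(c + v) + w \<in> Bt" by (rule Bt_ideal)
      thus "u + c \<in> Bt" using \<open>u = v + w\<close> by (simp add: ac_simps)
    qed
  next
    case False
    hence cP: "c \<in> sem \<rho> (bigPar (z # zs))" using 3 by simp
    show ?thesis unfolding bigop.simps sem.simps
    proof (rule orthI)
      fix u assume "u \<in> psum (orth (sem \<rho> y)) (orth (sem \<rho> (bigPar (z # zs))))"
      then obtain v w where u: "u = v + w" and w: "w \<in> orth (sem \<rho> (bigPar (z # zs)))"
        by (auto elim: psum_memE)
      have "c + w \<in> Bt" using orthD[OF w cP] .
      hence "(c + w) + v \<in> Bt" by (rule Bt_ideal)
      thus "u + c \<in> Bt" using u by (simp add: ac_simps)
    qed
  qed
qed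


lemma bigop_map: "(\<And>a b. g (f a b) = f' (g a) (g b)) \<Longrightarrow> g u = u' \<Longrightarrow>
  g (bigop f u xs) = bigop f' u' (map g xs)"
  by (induction xs rule: induct_list012) simp_all

lemma dual_dual[simp]: "dual (dual A) = A"
  by (induction A) simp_all

lemma dual_lift: "dual (lift k A) = lift k (dual A)"
  by (induction A arbitrary: k) simp_all

lemma dual_bigTensor: "dual (bigTensor xs) = bigPar (map dual xs)"
  by (rule bigop_map) simp_all
lemma dual_bigPar: "dual (bigPar xs) = bigTensor (map dual xs)"
  by (rule bigop_map) simp_all
lemma dual_bigWith: "dual (bigWith xs) = bigPlus (map dual xs)"
  by (rule bigop_map) simp_all
lemma dual_bigPlus: "dual (bigPlus xs) = bigWith (map dual xs)"
  by (rule bigop_map) simp_all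

lemma dual_pos: "dual (pos V s) = enc_state V s"
  by (simp add: pos_def enc_state_def dual_bigTensor comp_def)

lemma dual_encst: "dual (enc_state V s) = pos V s"
  by (simp add: pos_def enc_state_def dual_bigPar comp_def)

lemma dual_neg: "dual (neg V s) = bigWith (map (\<lambda>a. Par (lit a (s a)) Zero) V)"
  by (simp add: neg_def dual_bigPlus comp_def)

lemma dual_TA: "dual (TA V R Y) = bigPlus (map (\<lambda>(s, s'). With (dual (neg V s))
   (Par (enc_state V s) (Tensor (pos V s') (dual Y)))) R)"
  by (simp add: TA_def dual_bigWith comp_def split_def dual_pos dual_encst)

lemma dual_TE: "dual (TE V R Y) = bigWith (map (\<lambda>(s, s').
   Par (enc_state V s) (Tensor (pos V s') (dual Y))) R)"
  by (simp add: TE_def dual_bigPlus comp_def split_def dual_pos dual_encst)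

lemma dual_pos_sf: "dual (pos_sf V p) = bigPar (map (\<lambda>a. dual (case p a of None \<Rightarrow> Top | Some b \<Rightarrow> lit a b)) V)"
  by (simp add: pos_sf_def dual_bigTensor comp_def)

fun glit :: "'a form \<Rightarrow> 'a M" where
  "glit (Atom a) = gen a True"
| "glit (NAtom a) = gen a False"
| "glit _ = 0"

fun glitd :: "'a form \<Rightarrow> 'a M" where
  "glitd (Atom a) = gen a False"
| "glitd (NAtom a) = gen a True"
| "glitd _ = 0"

lemma glit_lit[simp]: "glit (lit a b) = gen a b"
  by (cases b) (simp_all add: lit_def)

lemma glitd_lit[simp]: "glitd (dual (lit a b)) = gen a b"
  by (cases b) (simp_all add: lit_def)

lemma glitd_lit2[simp]: "glitd (lit a b) = gen a (\<not> b)"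
  by (cases b) (simp_all add: lit_def)

lemma sem_pos: "distinct V \<Longrightarrow> sem \<rho> (pos V r) = orth (orth {mt V r})"
proof -
  assume d: "distinct V"
  have "sem \<rho> (pos V r) = orth (orth {sum_list (map glit (map (\<lambda>a. lit a (r a)) V))})"
    unfolding pos_def by (rule sem_bigTensor) (auto simp: sem_lit)
  also have "map glit (map (\<lambda>a. lit a (r a)) V) = map (\<lambda>a. gen a (r a)) V" by simp
  finally show ?thesis using sum_gen[OF d] by simp
qed

lemma sem_encst: "fenv \<rho> \<Longrightarrow> distinct V \<Longrightarrow> sem \<rho> (enc_state V r) = orth {mt V r}"
proof -
  assume f: "fenv \<rho>" and d: "distinct V"
  have "sem \<rho> (enc_state V r) = orth {sum_list (map glitd (map (\<lambda>a. dual (lit a (r a))) V))}"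
    unfolding enc_state_def by (rule sem_bigPar[OF f]) (auto simp: dual_lit orth_sem_lit)
  also have "map glitd (map (\<lambda>a. dual (lit a (r a))) V) = map (\<lambda>a. gen a (r a)) V" by simp
  finally show ?thesis using sum_gen[OF d] by simp
qed

lemma G_par:
  assumes f: "fenv \<rho>" and d: "distinct V" and W: "isfact (sem \<rho> Wf)"
    and c: "c + mt V r \<in> sem \<rho> Wf"
  shows "c \<in> sem \<rho> (Par (enc_state V r) Wf)"
proof -
  have "sem \<rho> (Par (enc_state V r) Wf) = orth (psum (orth (orth {mt V r})) (orth (sem \<rho> Wf)))"
    by (simp add: sem_encst[OF f d])
  also have "\<dots> = orth (psum {mt V r} (orth (sem \<rho> Wf)))" by (rule orth_psum_cl)
  finally have eq: "sem \<rho> (Par (enc_state V r) Wf) = orth (psum {mt V r} (orth (sem \<rho> Wf)))" .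
  have "c \<in> orth (psum {mt V r} (orth (sem \<rho> Wf)))"
  proof (rule orthI)
    fix u assume "u \<in> psum {mt V r} (orth (sem \<rho> Wf))"
    then obtain w where u: "u = mt V r + w" and w: "w \<in> orth (sem \<rho> Wf)" by (auto elim: psum_memE)
    have "c + mt V r + w \<in> Bt" using orthD[OF w c] by (simp add: ac_simps)
    thus "u + c \<in> Bt" using u by (simp add: ac_simps)
  qed
  with eq show ?thesis by simp
qed

lemma G2:
  assumes f: "fenv \<rho>" and d: "distinct V" and ag: "agree V t r" and Y: "ct V r' \<in> sem \<rho> Yf"
  shows "ct V t \<in> sem \<rho> (Par (enc_state V r) (Tensor (pos V r') Yf))"
proof (rule G_par[OF f d])
  show "isfact (sem \<rho> (Tensor (pos V r') Yf))" by (rule sem_fact[OF f])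
  have "mt V r' \<in> sem \<rho> (pos V r')" using sem_pos[OF d] orth_ext by blast
  hence "mt V r' + ct V r' \<in> psum (sem \<rho> (pos V r')) (sem \<rho> Yf)" using Y by (rule psum_memI)
  hence "mt V r' + ct V r' \<in> sem \<rho> (Tensor (pos V r') Yf)" using orth_ext by auto
  hence "piV V \<in> sem \<rho> (Tensor (pos V r') Yf)" by (simp only: mt_ct)
  thus "ct V t + mt V r \<in> sem \<rho> (Tensor (pos V r') Yf)"
    by (simp only: ct_mt_agree[OF ag])
qed

lemma G3:
  assumes f: "fenv \<rho>" and d: "distinct V" and ag: "\<not> agree V t r"
  shows "ct V t \<in> sem \<rho> (Par (enc_state V r) Wf)"
proof (rule G_par[OF f d])
  show "isfact (sem \<rho> Wf)" by (rule sem_fact[OF f])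
  thus "ct V t + mt V r \<in> sem \<rho> Wf" using Bt_sub_fact ct_mt_Bt[OF ag] by blast
qed

lemma fact_Bt: "isfact Bt"
  by (simp add: Bt_fact)

lemma G1:
  assumes f: "fenv \<rho>" and ag: "agree V t r"
  shows "ct V t \<in> sem \<rho> (dual (neg V r))"
proof -
  have "\<And>a. a \<in> set V \<Longrightarrow> ct V t \<in> sem \<rho> (Par (lit a (r a)) Zero)"
  proof -
    fix a assume a: "a \<in> set V"
    have e: "sem \<rho> (Par (lit a (r a)) Zero) = orth (psum (orth (orth {gen a (\<not> r a)})) UNIV)"
      by (simp only: sem.simps orth_sem_lit fact_eq[OF fact_UNIV])
    have "ct V t \<in> orth (psum (orth (orth {gen a (\<not> r a)})) UNIV)"
    proof (rule orthI)
      fix u assume "u \<in> psum (orth (orth {gen a (\<not> r a)})) UNIV"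
      then obtain v w where u: "u = v + w" and v: "v \<in> orth (orth {gen a (\<not> r a)})"
        by (auto elim: psum_memE)
      have "(\<not> r a) \<noteq> t a" using ag a by (simp add: agree_def)
      hence "ct V t + gen a (\<not> r a) \<in> Bt" by (rule ct_gen_Bt[OF a])
      hence "ct V t + v \<in> Bt" using closure_into_fact[OF fact_Bt _ v] by auto
      hence "(ct V t + v) + w \<in> Bt" by (rule Bt_ideal)
      thus "u + ct V t \<in> Bt" using u by (simp add: ac_simps)
    qed
    thus "ct V t \<in> sem \<rho> (Par (lit a (r a)) Zero)" using e by simp
  qed
  thus ?thesis by (simp add: dual_neg sem_bigWith)
qed

lemma G4:
  assumes f: "fenv \<rho>" and a: "a \<in> set V" and pa: "p a = Some b" and ne: "b \<noteq> t a"
  shows "ct V t \<in> sem \<rho> (dual (pos_sf V p))"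
proof -
  have x: "dual (lit a b) \<in> set (map (\<lambda>a. dual (case p a of None \<Rightarrow> Top | Some b \<Rightarrow> lit a b)) V)"
    using a pa by force
  have "\<forall>z\<in>orth (sem \<rho> (dual (lit a b))). ct V t + z \<in> Bt"
  proof
    fix z assume "z \<in> orth (sem \<rho> (dual (lit a b)))"
    hence z: "z \<in> orth (orth {gen a b})" by (simp add: dual_lit orth_sem_lit)
    have "ct V t + gen a b \<in> Bt" using ct_gen_Bt a ne by metis
    thus "ct V t + z \<in> Bt" using closure_into_fact[OF fact_Bt _ z] by auto
  qed
  thus ?thesis unfolding dual_pos_sf by (rule sem_bigPar_elem[OF f x])
qed




lemma agree_refl[simp]: "agree V s s" by (simp add: agree_def)
lemma agree_sym: "agree V s t \<Longrightarrow> agree V t s" by (simp add: agree_def)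
lemma agree_trans: "agree V s t \<Longrightarrow> agree V t u \<Longrightarrow> agree V s u" by (simp add: agree_def)

lemma trans_iff: "trans V R s t \<longleftrightarrow> (\<exists>(r, r')\<in>set R. agree V s r \<and> agree V t r')"
  by (simp add: trans_def agree_def)

lemma trans_agree:
  assumes a1: "agree V s s'" and a2: "agree V t t'" and tr: "trans V R s t"
  shows "trans V R s' t'"
proof -
  obtain r r' where rr: "(r, r') \<in> set R" "agree V s r" "agree V t r'" using tr unfolding trans_iff by blast
  have "agree V s' r" using agree_trans[OF agree_sym[OF a1] rr(2)] .
  moreover have "agree V t' r'" using agree_trans[OF agree_sym[OF a2] rr(3)] .
  ultimately show ?thesis using rr(1) unfolding trans_iff by (auto intro!: bexI[of _ "(r, r')"])
qed

lemma trans_rule: "(r, r') \<in> set R \<Longrightarrow> agree V s r \<Longrightarrow> trans V R s r'"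
  unfolding trans_iff by (auto intro!: bexI[of _ "(r, r')"])

lemma ct_agree: "agree V s s' \<Longrightarrow> ct V s = ct V s'"
  by (auto simp: ct_def agree_def fun_eq_iff)

lemma path_swap:
  assumes "is_path V R s' \<pi>" "agree V s s'"
  shows "is_path V R s (\<pi>(0 := s)) \<and> (\<forall>i. agree V (\<pi> i) ((\<pi>(0 := s)) i))"
proof -
  have p0: "\<pi> 0 = s'" and tr: "\<forall>i. trans V R (\<pi> i) (\<pi> (Suc i))" using assms(1) by (auto simp: is_path_def)
  have "\<forall>i. trans V R ((\<pi>(0 := s)) i) ((\<pi>(0 := s)) (Suc i))"
  proof
    fix i show "trans V R ((\<pi>(0 := s)) i) ((\<pi>(0 := s)) (Suc i))"
    proof (cases i)
      case 0
      have "trans V R (\<pi> 0) (\<pi> 1)" using tr by simp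
      hence "trans V R s (\<pi> 1)" using trans_agree[of V "\<pi> 0" s "\<pi> 1" "\<pi> 1"] assms(2) p0
        by (simp add: agree_sym)
      thus ?thesis using 0 by simp
    next
      case (Suc j) thus ?thesis using tr by simp
    qed
  qed
  moreover have "\<forall>i. agree V (\<pi> i) ((\<pi>(0 := s)) i)" using assms(2) p0 by (simp add: agree_sym)
  ultimately show ?thesis by (simp add: is_path_def)
qed

lemma path_tail: "is_path V R s \<pi> \<Longrightarrow> is_path V R (\<pi> 1) (\<lambda>i. \<pi> (Suc i))"
  by (simp add: is_path_def)

lemma path_cons: "trans V R s t \<Longrightarrow> is_path V R t \<pi> \<Longrightarrow>
  is_path V R s (\<lambda>i. case i of 0 \<Rightarrow> s | Suc j \<Rightarrow> \<pi> j)"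
  unfolding is_path_def by (auto split: nat.splits)

lemma path_trans1: "is_path V R s \<pi> \<Longrightarrow> trans V R s (\<pi> 1)"
  by (auto simp: is_path_def dest: spec[of _ 0])

lemma inf_path:
  assumes "t \<in> B" "\<And>s. s \<in> B \<Longrightarrow> \<exists>s'. trans V R s s' \<and> s' \<in> B"
  shows "\<exists>\<pi>. is_path V R t \<pi> \<and> (\<forall>i. \<pi> i \<in> B)"
proof -
  define nx where "nx s = (SOME s'. trans V R s s' \<and> s' \<in> B)" for s
  define \<pi> where "\<pi> = rec_nat t (\<lambda>_ s. nx s)"
  have inB: "\<forall>i. \<pi> i \<in> B"
  proof
    fix i show "\<pi> i \<in> B"
    proof (induction i)
      case 0 thus ?case using assms(1) by (simp add: \<pi>_def)
    next
      case (Suc i)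
      have "\<exists>s'. trans V R (\<pi> i) s' \<and> s' \<in> B" using assms(2) Suc.IH by blast
      hence "trans V R (\<pi> i) (nx (\<pi> i)) \<and> nx (\<pi> i) \<in> B"
        unfolding nx_def by (rule someI_ex)
      thus ?case by (simp add: \<pi>_def)
    qed
  qed
  have "\<forall>i. trans V R (\<pi> i) (\<pi> (Suc i))"
  proof
    fix i
    have "\<exists>s'. trans V R (\<pi> i) s' \<and> s' \<in> B" using assms(2) inB by blast
    hence "trans V R (\<pi> i) (nx (\<pi> i)) \<and> nx (\<pi> i) \<in> B"
      unfolding nx_def by (rule someI_ex)
    thus "trans V R (\<pi> i) (\<pi> (Suc i))" by (simp add: \<pi>_def)
  qed
  moreover have "\<pi> 0 = t" by (simp add: \<pi>_def)
  ultimately show ?thesis using inB by (auto simp: is_path_def)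
qed

lemma serial_path: "serial V R \<Longrightarrow> \<exists>\<pi>. is_path V R t \<pi>"
  using inf_path[of t UNIV V R] by (auto simp: serial_def)

lemma models_agree: "agree V s s' \<Longrightarrow> models V R s F \<Longrightarrow> models V R s' F"
proof (induction F arbitrary: s s')
  case (SF p) thus ?case by (simp add: agree_def)
next
  case (CAnd F G) thus ?case by simp
next
  case (COr F G) thus ?case by auto
next
  case (CAX F)
  show ?case unfolding models.simps
  proof (intro allI impI)
    fix t assume "trans V R s' t"
    hence "trans V R s t" using trans_agree[OF agree_sym[OF CAX.prems(1)] agree_refl] by blast
    thus "models V R t F" using CAX.prems(2) by simp
  qed
next
  case (CEX F)
  then obtain t where "trans V R s t" "models V R t F" by auto
  hence "trans V R s' t" using trans_agree[OF CEX.prems(1) agree_refl] by blast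
  thus ?case using \<open>models V R t F\<close> by auto
next
  case (CAF F)
  show ?case unfolding models.simps
  proof (intro allI impI)
    fix \<pi> assume p: "is_path V R s' \<pi>"
    note ps = path_swap[OF p CAF.prems(1)]
    then obtain i where i: "models V R ((\<pi>(0 := s)) i) F" using CAF.prems(2) by auto
    have "agree V ((\<pi>(0 := s)) i) (\<pi> i)" using ps agree_sym by blast
    hence "models V R (\<pi> i) F" using i by (rule CAF.IH)
    thus "\<exists>i. models V R (\<pi> i) F" by blast
  qed
next
  case (CEF F)
  from CEF.prems(2) obtain \<pi> i where p: "is_path V R s \<pi>" and f: "models V R (\<pi> i) F" by auto
  note ps = path_swap[OF p agree_sym[OF CEF.prems(1)]]
  have "models V R ((\<pi>(0 := s')) i) F" using ps f CEF.IH by blast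
  hence "is_path V R s' (\<pi>(0 := s')) \<and> models V R ((\<pi>(0 := s')) i) F" using ps by blast
  thus ?case unfolding models.simps by blast
next
  case (CAG F)
  show ?case unfolding models.simps
  proof (intro allI impI)
    fix \<pi> i assume p: "is_path V R s' \<pi>"
    note ps = path_swap[OF p CAG.prems(1)]
    have "is_path V R s (\<pi>(0 := s))" using ps by blast
    hence i: "models V R ((\<pi>(0 := s)) i) F" using CAG.prems(2) unfolding models.simps by blast
    have "agree V ((\<pi>(0 := s)) i) (\<pi> i)" using ps agree_sym by blast
    thus "models V R (\<pi> i) F" using i by (rule CAG.IH)
  qed
next
  case (CEG F)
  from CEG.prems(2) obtain \<pi> where p: "is_path V R s \<pi>" and f: "\<forall>i. models V R (\<pi> i) F" by auto
  note ps = path_swap[OF p agree_sym[OF CEG.prems(1)]]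
  have "\<forall>i. models V R ((\<pi>(0 := s')) i) F"
  proof
    fix i show "models V R ((\<pi>(0 := s')) i) F" using ps f CEG.IH by blast
  qed
  hence "is_path V R s' (\<pi>(0 := s')) \<and> (\<forall>i. models V R ((\<pi>(0 := s')) i) F)" using ps by blast
  thus ?case unfolding models.simps by blast
next
  case (CAU F G)
  show ?case unfolding models.simps
  proof (intro allI impI)
    fix \<pi> assume p: "is_path V R s' \<pi>"
    note ps = path_swap[OF p CAU.prems(1)]
    have "is_path V R s (\<pi>(0 := s))" using ps by blast
    then obtain i where g: "models V R ((\<pi>(0 := s)) i) G" and f: "\<forall>j<i. models V R ((\<pi>(0 := s)) j) F"
      using CAU.prems(2) unfolding models.simps by blast
    have ag: "\<And>j. agree V ((\<pi>(0 := s)) j) (\<pi> j)" using ps agree_sym by blast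
    have "models V R (\<pi> i) G" using ag g by (rule CAU.IH(2))
    moreover have "\<forall>j<i. models V R (\<pi> j) F" using ag f CAU.IH(1) by blast
    ultimately show "\<exists>i. models V R (\<pi> i) G \<and> (\<forall>j<i. models V R (\<pi> j) F)" by blast
  qed
next
  case (CEU F G)
  from CEU.prems(2) obtain \<pi> i where p: "is_path V R s \<pi>" and g: "models V R (\<pi> i) G"
    and f: "\<forall>j<i. models V R (\<pi> j) F" by auto
  note ps = path_swap[OF p agree_sym[OF CEU.prems(1)]]
  have ag: "\<And>j. agree V (\<pi> j) ((\<pi>(0 := s')) j)" using ps by blast
  have "models V R ((\<pi>(0 := s')) i) G" using ag g by (rule CEU.IH(2))
  moreover have "\<forall>j<i. models V R ((\<pi>(0 := s')) j) F" using ag f CEU.IH(1) by blast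
  ultimately have "is_path V R s' (\<pi>(0 := s')) \<and> models V R ((\<pi>(0 := s')) i) G \<and>
    (\<forall>j<i. models V R ((\<pi>(0 := s')) j) F)" using ps by blast
  thus ?case unfolding models.simps by blast
qed

lemma models_agree_iff: "agree V s s' \<Longrightarrow> models V R s F = models V R s' F"
  using models_agree agree_sym by blast


lemma plus_in1: "c \<in> sem \<rho> A \<Longrightarrow> c \<in> sem \<rho> (Plus A B)"
  using orth_ext[of "sem \<rho> A \<union> sem \<rho> B"] by auto

lemma plus_in2: "c \<in> sem \<rho> B \<Longrightarrow> c \<in> sem \<rho> (Plus A B)"
  using orth_ext[of "sem \<rho> A \<union> sem \<rho> B"] by auto

lemma CT_TA:
  assumes f: "fenv \<rho>" and d: "distinct V" and r: "(r, r') \<in> set R" and ag: "agree V t r"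
    and Y: "ct V r' \<in> sem \<rho> (dual Y)"
  shows "ct V t \<in> sem \<rho> (dual (TA V R Y))"
proof -
  let ?x = "With (dual (neg V r)) (Par (enc_state V r) (Tensor (pos V r') (dual Y)))"
  have x: "?x \<in> set (map (\<lambda>(s, s'). With (dual (neg V s))
     (Par (enc_state V s) (Tensor (pos V s') (dual Y)))) R)" using r by force
  have "ct V t \<in> sem \<rho> ?x" using G1[OF f ag] G2[OF f d ag Y] by simp
  thus ?thesis unfolding dual_TA using sem_bigPlus[OF x] by blast
qed

lemma CT_TE:
  assumes f: "fenv \<rho>" and d: "distinct V"
    and Y: "\<forall>(r, r')\<in>set R. agree V t r \<longrightarrow> ct V r' \<in> sem \<rho> (dual Y)"
  shows "ct V t \<in> sem \<rho> (dual (TE V R Y))"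
  unfolding dual_TE sem_bigWith
proof
  fix x assume "x \<in> set (map (\<lambda>(s, s'). Par (enc_state V s) (Tensor (pos V s') (dual Y))) R)"
  then obtain r r' where r: "(r, r') \<in> set R" and x: "x = Par (enc_state V r) (Tensor (pos V r') (dual Y))"
    by auto
  show "ct V t \<in> sem \<rho> x"
  proof (cases "agree V t r")
    case True
    hence "ct V r' \<in> sem \<rho> (dual Y)" using Y r by blast
    thus ?thesis using G2[OF f d True] x by simp
  next
    case False thus ?thesis using G3[OF f d False, of "Tensor (pos V r') (dual Y)"] x by simp
  qed
qed

lemma fenv_ins0: "isfact X \<Longrightarrow> fenv (ins 0 X rho0)"
  by (rule fenv_ins[OF fenv_rho0])

lemma sem_ins0_lift: "sem (ins 0 X rho0) (lift 0 A) = sem rho0 A"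
  by (rule sem_lift)

lemma sem_ins0_var: "sem (ins 0 X rho0) (Var 0) = X"
  by (simp add: ins_def)

lemma nu_consumer:
  assumes "\<And>t. t \<in> T \<Longrightarrow> ct V t \<in> sem (ins 0 (orth (orth (ct V ` T))) rho0) B"
  shows "t \<in> T \<Longrightarrow> ct V t \<in> sem rho0 (Nu B)"
proof -
  assume t: "t \<in> T"
  let ?X = "orth (orth (ct V ` T))"
  have fW: "isfact (sem (ins 0 ?X rho0) B)" by (rule sem_fact[OF fenv_ins0]) simp
  have "ct V ` T \<subseteq> sem (ins 0 ?X rho0) B" using assms by blast
  hence "?X \<subseteq> orth (orth (sem (ins 0 ?X rho0) B))" by (intro orth_anti)
  hence "?X \<subseteq> sem (ins 0 ?X rho0) B" using fW by (simp add: fact_eq)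
  hence "?X \<subseteq> sem rho0 (Nu B)" by (rule nu_coind[OF fact_orth])
  moreover have "ct V t \<in> ?X" using t orth_ext by blast
  ultimately show ?thesis by blast
qed

lemma in_X: "t \<in> T \<Longrightarrow> ct V t \<in> orth (orth (ct V ` T))"
  using orth_ext by blast

lemma mu_step: "c \<in> sem (ins 0 (sem rho0 (Mu B)) rho0) B \<Longrightarrow> c \<in> sem rho0 (Mu B)"
  using mu_unfold by blast

lemma fact_mu0: "isfact (sem rho0 (Mu B))"
  by (rule fact0)

lemma not_models_agree: "agree V s s' \<Longrightarrow> \<not> models V R s F \<Longrightarrow> \<not> models V R s' F"
  using models_agree_iff by blast




theorem consumer:
  assumes d: "distinct V" and ser: "serial V R"
  shows "\<not> models V R t F \<Longrightarrow> ct V t \<in> sem rho0 (dual (enc V R F))"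
proof (induction F arbitrary: t)
  case (SF p)
  hence "\<exists>a\<in>set V. \<exists>b. p a = Some b \<and> b \<noteq> t a" by (simp only: models.simps) blast
  then obtain a b where a: "a \<in> set V" and pa: "p a = Some b" and ne: "b \<noteq> t a" by blast
  thus ?case using G4[where \<rho>=rho0 and a=a and p=p and b=b and t=t and V=V, OF fenv_rho0 a pa ne] by simp
next
  case (CAnd F G)
  hence "\<not> models V R t F \<or> \<not> models V R t G" by simp
  thus ?case
  proof
    assume "\<not> models V R t F"
    hence "ct V t \<in> sem rho0 (dual (enc V R F))" by (rule CAnd.IH(1))
    hence "ct V t \<in> sem rho0 (Plus (dual (enc V R F)) (dual (enc V R G)))" by (rule plus_in1)
    thus ?case by simp
  next
    assume "\<not> models V R t G"
    hence "ct V t \<in> sem rho0 (dual (enc V R G))" by (rule CAnd.IH(2))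
    hence "ct V t \<in> sem rho0 (Plus (dual (enc V R F)) (dual (enc V R G)))" by (rule plus_in2)
    thus ?case by simp
  qed
next
  case (COr F G)
  thus ?case by simp
next
  case (CAX F)
  then obtain t' where tr: "trans V R t t'" and nf: "\<not> models V R t' F" by auto
  then obtain r r' where r: "(r, r') \<in> set R" "agree V t r" "agree V t' r'"
    unfolding trans_iff by blast
  have "\<not> models V R r' F" using not_models_agree[OF r(3) nf] .
  hence "ct V r' \<in> sem rho0 (dual (enc V R F))" by (rule CAX.IH)
  thus ?case using CT_TA[OF fenv_rho0 d r(1,2)] by simp
next
  case (CEX F)
  have "\<forall>(r, r')\<in>set R. agree V t r \<longrightarrow> ct V r' \<in> sem rho0 (dual (enc V R F))"
  proof (clarify)
    fix r r' assume r: "(r, r') \<in> set R" "agree V t r"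
    hence "trans V R t r'" by (rule trans_rule)
    hence "\<not> models V R r' F" using CEX.prems by auto
    thus "ct V r' \<in> sem rho0 (dual (enc V R F))" by (rule CEX.IH)
  qed
  thus ?case using CT_TE[OF fenv_rho0 d] by simp
next
  case (CAF F)
  let ?T = "{t. \<not> models V R t (CAF F)}"
  let ?B = "With (lift 0 (dual (enc V R F))) (dual (TA V R (Var 0)))"
  have "\<And>t. t \<in> ?T \<Longrightarrow> ct V t \<in> sem (ins 0 (orth (orth (ct V ` ?T))) rho0) ?B"
  proof -
    fix t assume t: "t \<in> ?T"
    then obtain \<pi> where p: "is_path V R t \<pi>" and nf: "\<forall>i. \<not> models V R (\<pi> i) F" by auto
    have "\<not> models V R t F" using p nf by (metis is_path_def)
    hence c1: "ct V t \<in> sem (ins 0 (orth (orth (ct V ` ?T))) rho0) (lift 0 (dual (enc V R F)))"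
      using CAF.IH by (simp add: sem_ins0_lift)
    have "trans V R t (\<pi> 1)" by (rule path_trans1[OF p])
    then obtain r r' where r: "(r, r') \<in> set R" "agree V t r" "agree V (\<pi> 1) r'"
      unfolding trans_iff by blast
    have "\<not> models V R (\<pi> 1) (CAF F)" using path_tail[OF p] nf by auto
    hence "\<not> models V R r' (CAF F)" by (rule not_models_agree[OF r(3)])
    hence "r' \<in> ?T" by blast
    hence "ct V r' \<in> orth (orth (ct V ` ?T))" by (rule in_X)
    hence "ct V r' \<in> sem (ins 0 (orth (orth (ct V ` ?T))) rho0) (dual (Var 0))"
      by (simp only: dual.simps sem_ins0_var)
    hence c2: "ct V t \<in> sem (ins 0 (orth (orth (ct V ` ?T))) rho0) (dual (TA V R (Var 0)))"
      by (rule CT_TA[OF fenv_ins0[OF fact_orth] d r(1,2)])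
    show "ct V t \<in> sem (ins 0 (orth (orth (ct V ` ?T))) rho0) ?B" using c1 c2 by simp
  qed
  note step = this
  have tT: "t \<in> ?T" using CAF.prems by simp
  have "ct V t \<in> sem rho0 (Nu ?B)" by (rule nu_consumer[OF step tT])
  thus ?case by (simp add: dual_lift)
next
  case (CEF F)
  let ?T = "{t. \<not> models V R t (CEF F)}"
  let ?B = "With (lift 0 (dual (enc V R F))) (dual (TE V R (Var 0)))"
  have "\<And>t. t \<in> ?T \<Longrightarrow> ct V t \<in> sem (ins 0 (orth (orth (ct V ` ?T))) rho0) ?B"
  proof -
    fix t assume t: "t \<in> ?T"
    obtain \<pi> where p: "is_path V R t \<pi>" using serial_path[OF ser] by blast
    have "\<not> models V R t F" using t p by (metis is_path_def models.simps(7) mem_Collect_eq)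
    hence c1: "ct V t \<in> sem (ins 0 (orth (orth (ct V ` ?T))) rho0) (lift 0 (dual (enc V R F)))"
      using CEF.IH by (simp add: sem_ins0_lift)
    have "\<forall>(r, r')\<in>set R. agree V t r \<longrightarrow>
      ct V r' \<in> sem (ins 0 (orth (orth (ct V ` ?T))) rho0) (dual (Var 0))"
    proof (clarify)
      fix r r' assume r: "(r, r') \<in> set R" "agree V t r"
      hence tr: "trans V R t r'" by (rule trans_rule)
      have "r' \<in> ?T"
      proof
        show "\<not> models V R r' (CEF F)"
        proof
          assume "models V R r' (CEF F)"
          then obtain \<pi>' i where p': "is_path V R r' \<pi>'" and f: "models V R (\<pi>' i) F" by auto
          have "is_path V R t (\<lambda>i. case i of 0 \<Rightarrow> t | Suc j \<Rightarrow> \<pi>' j)" by (rule path_cons[OF tr p'])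
          moreover have "models V R ((\<lambda>i. case i of 0 \<Rightarrow> t | Suc j \<Rightarrow> \<pi>' j) (Suc i)) F" using f by simp
          ultimately have "models V R t (CEF F)" unfolding models.simps by blast
          thus False using t by blast
        qed
      qed
      hence "ct V r' \<in> orth (orth (ct V ` ?T))" by (rule in_X)
      thus "ct V r' \<in> sem (ins 0 (orth (orth (ct V ` ?T))) rho0) (dual (Var 0))"
        by (simp only: dual.simps sem_ins0_var)
    qed
    hence c2: "ct V t \<in> sem (ins 0 (orth (orth (ct V ` ?T))) rho0) (dual (TE V R (Var 0)))"
      by (rule CT_TE[OF fenv_ins0[OF fact_orth] d])
    show "ct V t \<in> sem (ins 0 (orth (orth (ct V ` ?T))) rho0) ?B" using c1 c2 by simp
  qed
  note step = this
  have tT: "t \<in> ?T" using CEF.prems by simp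
  have "ct V t \<in> sem rho0 (Nu ?B)" by (rule nu_consumer[OF step tT])
  thus ?case by (simp add: dual_lift)
next
  case (CAG F)
  let ?B = "Plus (lift 0 (dual (enc V R F))) (dual (TA V R (Var 0)))"
  let ?L = "sem rho0 (Mu ?B)"
  have key: "\<forall>t \<pi>. is_path V R t \<pi> \<longrightarrow> \<not> models V R (\<pi> i) F \<longrightarrow> ct V t \<in> ?L" for i
  proof (induction i)
    case 0
    show ?case
    proof (intro allI impI)
      fix t \<pi> assume p: "is_path V R t \<pi>" and nf: "\<not> models V R (\<pi> 0) F"
      have "\<pi> 0 = t" using p by (simp add: is_path_def)
      hence "ct V t \<in> sem rho0 (dual (enc V R F))" using nf CAG.IH by simp
      hence "ct V t \<in> sem (ins 0 ?L rho0) (lift 0 (dual (enc V R F)))" by (simp only: sem_ins0_lift)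
      hence "ct V t \<in> sem (ins 0 ?L rho0) ?B" by (rule plus_in1)
      thus "ct V t \<in> ?L" by (rule mu_step)
    qed
  next
    case (Suc i)
    show ?case
    proof (intro allI impI)
      fix t \<pi> assume p: "is_path V R t \<pi>" and nf: "\<not> models V R (\<pi> (Suc i)) F"
      have "ct V (\<pi> 1) \<in> ?L" using Suc.IH path_tail[OF p] nf by auto
      have "trans V R t (\<pi> 1)" by (rule path_trans1[OF p])
      then obtain r r' where r: "(r, r') \<in> set R" "agree V t r" "agree V (\<pi> 1) r'"
        unfolding trans_iff by blast
      have "ct V r' \<in> ?L" using \<open>ct V (\<pi> 1) \<in> ?L\<close> ct_agree[OF r(3)] by simp
      hence "ct V r' \<in> sem (ins 0 ?L rho0) (dual (Var 0))" by (simp only: dual.simps sem_ins0_var)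
      hence "ct V t \<in> sem (ins 0 ?L rho0) (dual (TA V R (Var 0)))"
        by (rule CT_TA[OF fenv_ins0[OF fact0] d r(1,2)])
      hence "ct V t \<in> sem (ins 0 ?L rho0) ?B" by (rule plus_in2)
      thus "ct V t \<in> ?L" by (rule mu_step)
    qed
  qed
  from CAG.prems obtain \<pi> i where "is_path V R t \<pi>" "\<not> models V R (\<pi> i) F" by auto
  hence "ct V t \<in> ?L" using key by blast
  thus ?case by (simp add: dual_lift)
next
  case (CEG F)
  let ?B = "Plus (lift 0 (dual (enc V R F))) (dual (TE V R (Var 0)))"
  let ?L = "sem rho0 (Mu ?B)"
  let ?BS = "{s. \<not> models V R s (CEG F) \<and> ct V s \<notin> ?L}"
  have BF: "models V R s F" if s: "s \<in> ?BS" for s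
  proof (rule ccontr)
    assume "\<not> models V R s F"
    hence "ct V s \<in> sem rho0 (dual (enc V R F))" by (rule CEG.IH)
    hence "ct V s \<in> sem (ins 0 ?L rho0) (lift 0 (dual (enc V R F)))" by (simp only: sem_ins0_lift)
    hence "ct V s \<in> sem (ins 0 ?L rho0) ?B" by (rule plus_in1)
    hence "ct V s \<in> ?L" by (rule mu_step)
    thus False using s by blast
  qed
  have step: "\<exists>s'. trans V R s s' \<and> s' \<in> ?BS" if s: "s \<in> ?BS" for s
  proof -
    have "\<not> (\<forall>(r, r')\<in>set R. agree V s r \<longrightarrow> ct V r' \<in> sem (ins 0 ?L rho0) (dual (Var 0)))"
    proof
      assume "\<forall>(r, r')\<in>set R. agree V s r \<longrightarrow> ct V r' \<in> sem (ins 0 ?L rho0) (dual (Var 0))"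
      hence "ct V s \<in> sem (ins 0 ?L rho0) (dual (TE V R (Var 0)))"
        by (rule CT_TE[OF fenv_ins0[OF fact0] d])
      hence "ct V s \<in> sem (ins 0 ?L rho0) ?B" by (rule plus_in2)
      hence "ct V s \<in> ?L" by (rule mu_step)
      thus False using s by blast
    qed
    moreover have eqL: "sem (ins 0 ?L rho0) (dual (Var 0)) = ?L" by (simp only: dual.simps sem_ins0_var)
    ultimately have "\<not> (\<forall>(r, r')\<in>set R. agree V s r \<longrightarrow> ct V r' \<in> ?L)"
      by (simp only: eqL not_False_eq_True)
    then obtain r r' where r: "(r, r') \<in> set R" "agree V s r" and nL: "ct V r' \<notin> ?L"
      by blast
    have tr: "trans V R s r'" using r by (rule trans_rule)
    have "\<not> models V R r' (CEG F)"
    proof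
      assume "models V R r' (CEG F)"
      then obtain \<pi>' where p': "is_path V R r' \<pi>'" and f: "\<forall>i. models V R (\<pi>' i) F" by auto
      have "is_path V R s (\<lambda>i. case i of 0 \<Rightarrow> s | Suc j \<Rightarrow> \<pi>' j)" by (rule path_cons[OF tr p'])
      moreover have "\<forall>i. models V R ((\<lambda>i. case i of 0 \<Rightarrow> s | Suc j \<Rightarrow> \<pi>' j) i) F"
        using f BF[OF s] by (simp split: nat.split)
      ultimately have "models V R s (CEG F)" unfolding models.simps by blast
      thus False using s by blast
    qed
    thus ?thesis using tr nL by blast
  qed
  show ?case
  proof (rule ccontr)
    assume "\<not> ct V t \<in> sem rho0 (dual (enc V R (CEG F)))"
    hence "t \<in> ?BS" using CEG.prems by (simp add: dual_lift)
    then obtain \<pi> where p: "is_path V R t \<pi>" and inB: "\<forall>i. \<pi> i \<in> ?BS"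
      using inf_path[of t ?BS V R] step by blast
    have "\<forall>i. models V R (\<pi> i) F" using inB BF by blast
    hence "models V R t (CEG F)" using p unfolding models.simps by blast
    thus False using CEG.prems by blast
  qed
next
  case (CAU F G)
  let ?T = "{t. \<not> models V R t (CAU F G)}"
  let ?B = "With (lift 0 (dual (enc V R G))) (Plus (lift 0 (dual (enc V R F))) (dual (TA V R (Var 0))))"
  let ?X = "orth (orth (ct V ` ?T))"
  have "\<And>t. t \<in> ?T \<Longrightarrow> ct V t \<in> sem (ins 0 ?X rho0) ?B"
  proof -
    fix t assume t: "t \<in> ?T"
    then obtain \<pi> where p: "is_path V R t \<pi>"
      and nu: "\<forall>i. \<not> (models V R (\<pi> i) G \<and> (\<forall>j<i. models V R (\<pi> j) F))" by auto
    have p0: "\<pi> 0 = t" using p by (simp add: is_path_def)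
    have "\<not> models V R t G" using nu[rule_format, of 0] p0 by simp
    hence "ct V t \<in> sem rho0 (dual (enc V R G))" by (rule CAU.IH(2))
    hence c1: "ct V t \<in> sem (ins 0 ?X rho0) (lift 0 (dual (enc V R G)))" by (simp only: sem_ins0_lift)
    have c2: "ct V t \<in> sem (ins 0 ?X rho0) (Plus (lift 0 (dual (enc V R F))) (dual (TA V R (Var 0))))"
    proof (cases "models V R t F")
      case False
      hence "ct V t \<in> sem rho0 (dual (enc V R F))" by (rule CAU.IH(1))
      hence "ct V t \<in> sem (ins 0 ?X rho0) (lift 0 (dual (enc V R F)))" by (simp only: sem_ins0_lift)
      thus ?thesis by (rule plus_in1)
    next
      case True
      have "\<forall>i. \<not> (models V R (\<pi> (Suc i)) G \<and> (\<forall>j<i. models V R (\<pi> (Suc j)) F))"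
      proof (intro allI notI)
        fix i assume a: "models V R (\<pi> (Suc i)) G \<and> (\<forall>j<i. models V R (\<pi> (Suc j)) F)"
        have "\<forall>j<Suc i. models V R (\<pi> j) F"
        proof (intro allI impI)
          fix j assume "j < Suc i"
          thus "models V R (\<pi> j) F" using a True p0 by (cases j) auto
        qed
        thus False using nu a by blast
      qed
      hence "\<not> models V R (\<pi> 1) (CAU F G)" using path_tail[OF p] unfolding models.simps by auto
      moreover have "trans V R t (\<pi> 1)" by (rule path_trans1[OF p])
      then obtain r r' where r: "(r, r') \<in> set R" "agree V t r" "agree V (\<pi> 1) r'"
        unfolding trans_iff by blast
      ultimately have "\<not> models V R r' (CAU F G)" using not_models_agree by blast
      hence "r' \<in> ?T" by blast
      hence "ct V r' \<in> ?X" by (rule in_X)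
      hence "ct V r' \<in> sem (ins 0 ?X rho0) (dual (Var 0))" by (simp only: dual.simps sem_ins0_var)
      hence "ct V t \<in> sem (ins 0 ?X rho0) (dual (TA V R (Var 0)))"
        by (rule CT_TA[OF fenv_ins0[OF fact_orth] d r(1,2)])
      thus ?thesis by (rule plus_in2)
    qed
    show "ct V t \<in> sem (ins 0 ?X rho0) ?B" using c1 c2 by simp
  qed
  note step = this
  have tT: "t \<in> ?T" using CAU.prems by simp
  have "ct V t \<in> sem rho0 (Nu ?B)" by (rule nu_consumer[OF step tT])
  thus ?case by (simp add: dual_lift)
next
  case (CEU F G)
  let ?T = "{t. \<not> models V R t (CEU F G)}"
  let ?B = "With (lift 0 (dual (enc V R G))) (Plus (lift 0 (dual (enc V R F))) (dual (TE V R (Var 0))))"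
  let ?X = "orth (orth (ct V ` ?T))"
  have "\<And>t. t \<in> ?T \<Longrightarrow> ct V t \<in> sem (ins 0 ?X rho0) ?B"
  proof -
    fix t assume t: "t \<in> ?T"
    obtain \<pi> where p: "is_path V R t \<pi>" using serial_path[OF ser] by blast
    have p0: "\<pi> 0 = t" using p by (simp add: is_path_def)
    have "\<not> models V R t G"
    proof
      assume "models V R t G"
      hence "is_path V R t \<pi> \<and> models V R (\<pi> 0) G \<and> (\<forall>j<0. models V R (\<pi> j) F)" using p p0 by simp
      hence "models V R t (CEU F G)" unfolding models.simps by blast
      thus False using t by blast
    qed
    hence "ct V t \<in> sem rho0 (dual (enc V R G))" by (rule CEU.IH(2))
    hence c1: "ct V t \<in> sem (ins 0 ?X rho0) (lift 0 (dual (enc V R G)))" by (simp only: sem_ins0_lift)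
    have c2: "ct V t \<in> sem (ins 0 ?X rho0) (Plus (lift 0 (dual (enc V R F))) (dual (TE V R (Var 0))))"
    proof (cases "models V R t F")
      case False
      hence "ct V t \<in> sem rho0 (dual (enc V R F))" by (rule CEU.IH(1))
      hence "ct V t \<in> sem (ins 0 ?X rho0) (lift 0 (dual (enc V R F)))" by (simp only: sem_ins0_lift)
      thus ?thesis by (rule plus_in1)
    next
      case True
      have "\<forall>(r, r')\<in>set R. agree V t r \<longrightarrow> ct V r' \<in> sem (ins 0 ?X rho0) (dual (Var 0))"
      proof (clarify)
        fix r r' assume r: "(r, r') \<in> set R" "agree V t r"
        hence tr: "trans V R t r'" by (rule trans_rule)
        have "\<not> models V R r' (CEU F G)"
        proof
          assume "models V R r' (CEU F G)"
          then obtain \<pi>' i where p': "is_path V R r' \<pi>'" and g: "models V R (\<pi>' i) G"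
            and f: "\<forall>j<i. models V R (\<pi>' j) F" by auto
          let ?p = "\<lambda>i. case i of 0 \<Rightarrow> t | Suc j \<Rightarrow> \<pi>' j"
          have "is_path V R t ?p" by (rule path_cons[OF tr p'])
          moreover have "models V R (?p (Suc i)) G" using g by simp
          moreover have "\<forall>j<Suc i. models V R (?p j) F"
          proof (intro allI impI)
            fix j assume "j < Suc i" thus "models V R (?p j) F" using f True by (cases j) auto
          qed
          ultimately have "models V R t (CEU F G)" unfolding models.simps by blast
          thus False using t by blast
        qed
        hence "r' \<in> ?T" by blast
        hence "ct V r' \<in> ?X" by (rule in_X)
        thus "ct V r' \<in> sem (ins 0 ?X rho0) (dual (Var 0))" by (simp only: dual.simps sem_ins0_var)
      qed
      hence "ct V t \<in> sem (ins 0 ?X rho0) (dual (TE V R (Var 0)))"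
        by (rule CT_TE[OF fenv_ins0[OF fact_orth] d])
      thus ?thesis by (rule plus_in2)
    qed
    show "ct V t \<in> sem (ins 0 ?X rho0) ?B" using c1 c2 by simp
  qed
  note step = this
  have tT: "t \<in> ?T" using CEU.prems by simp
  have "ct V t \<in> sem rho0 (Nu ?B)" by (rule nu_consumer[OF step tT])
  thus ?case by (simp add: dual_lift)
qed




lemma sound_main:
  assumes d: "distinct V" and ser: "serial V R" and p: "prov {# enc_state V s, enc V R F #}"
  shows "models V R s F"
proof (rule ccontr)
  assume "\<not> models V R s F"
  hence c: "ct V s \<in> orth (sem rho0 (enc V R F))" using consumer[OF d ser] sem_dual0 by blast
  have m: "mt V s \<in> orth (sem rho0 (enc_state V s))"
    using sem_encst[OF fenv_rho0 d] orth_ext by auto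
  have "tst {# enc_state V s, enc V R F #} \<subseteq> Bt" by (rule soundness[OF p])
  moreover have "mt V s + (ct V s + 0) \<in> tst {# enc_state V s, enc V R F #}"
    unfolding tst_add tst_empty by (intro psum_memI m c) simp
  ultimately have "mt V s + ct V s \<in> Bt" by auto
  thus False using mt_ct piV_notin by metis
qed

section \<open>Completeness\<close>

fun nov :: "'a form \<Rightarrow> bool" where
  "nov (Var i) = False"
| "nov (Tensor A B) = (nov A \<and> nov B)"
| "nov (Par A B) = (nov A \<and> nov B)"
| "nov (With A B) = (nov A \<and> nov B)"
| "nov (Plus A B) = (nov A \<and> nov B)"
| "nov (Mu B) = nov B"
| "nov (Nu B) = nov B"
| "nov _ = True"

lemma subst_nov: "nov A \<Longrightarrow> subst k t A = A"
  by (induction A arbitrary: k t) simp_all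

lemma bigop_pred: "(\<forall>x\<in>set xs. P x) \<Longrightarrow> P u \<Longrightarrow> (\<And>a b. P a \<Longrightarrow> P b \<Longrightarrow> P (f a b)) \<Longrightarrow> P (bigop f u xs)"
  by (induction xs rule: induct_list012) simp_all

lemma nov_lit[simp]: "nov (lit a b)" by (simp add: lit_def)
lemma nov_dlit[simp]: "nov (dual (lit a b))" by (simp add: lit_def)

lemma nov_pos[simp]: "nov (pos V s)"
  unfolding pos_def by (rule bigop_pred) auto
lemma nov_encst[simp]: "nov (enc_state V s)"
  unfolding enc_state_def by (rule bigop_pred) auto
lemma nov_neg[simp]: "nov (neg V s)"
  unfolding neg_def by (rule bigop_pred) auto

lemma subst_lift: "subst k t (lift k A) = A"
  by (induction A arbitrary: k t) simp_all

lemma subst_TA: "subst k t (TA V R Y) = TA V R (subst k t Y)"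
proof -
  have "subst k t (TA V R Y) = bigWith (map (subst k t) (map (\<lambda>(s, s'). Plus (neg V s) (Tensor (pos V s) (Par (enc_state V s') Y))) R))"
    unfolding TA_def by (rule bigop_map) simp_all
  also have "\<dots> = TA V R (subst k t Y)"
    unfolding TA_def by (simp add: comp_def split_def subst_nov)
  finally show ?thesis .
qed

lemma subst_TE: "subst k t (TE V R Y) = TE V R (subst k t Y)"
proof -
  have "subst k t (TE V R Y) = bigPlus (map (subst k t) (map (\<lambda>(s, s'). Tensor (pos V s) (Par (enc_state V s') Y)) R))"
    unfolding TE_def by (rule bigop_map) simp_all
  also have "\<dots> = TE V R (subst k t Y)"
    unfolding TE_def by (simp add: comp_def split_def subst_nov)
  finally show ?thesis .
qed

lemma prov_lit: "prov {# lit a b, dual (lit a b) #}"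
  by (cases b) (simp_all add: lit_def add_mset_commute prov.init)

lemma prov_lit': "prov {# dual (lit a b), lit a b #}"
  using prov_lit by (simp add: add_mset_commute)

lemma par_big: "prov (mset xs + \<Gamma>) \<Longrightarrow> prov (add_mset (bigPar xs) \<Gamma>)"
proof (induction xs arbitrary: \<Gamma> rule: induct_list012)
  case 1 thus ?case by (simp add: prov.bot)
next
  case (2 x) thus ?case by simp
next
  case (3 x y zs)
  have "prov (mset (y # zs) + add_mset x \<Gamma>)" using 3(3) by simp
  hence "prov (add_mset (bigPar (y # zs)) (add_mset x \<Gamma>))" by (rule 3(2))
  hence "prov (add_mset x (add_mset (bigPar (y # zs)) \<Gamma>))" by (simp add: add_mset_commute)
  thus ?case by (simp add: prov.par)
qed

lemma tensor_big: "(\<forall>a\<in>set V. prov {# f a, g a #}) \<Longrightarrow>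
  prov (add_mset (bigTensor (map f V)) (mset (map g V)))"
proof (induction V rule: induct_list012)
  case 1 thus ?case by (simp add: prov.one)
next
  case (2 a) thus ?case by simp
next
  case (3 a b zs)
  have p1: "prov (add_mset (f a) {# g a #})" using 3(3) by simp
  have p2: "prov (add_mset (bigTensor (map f (b # zs))) (mset (map g (b # zs))))"
    using 3 by simp
  have "prov (add_mset (Tensor (f a) (bigTensor (map f (b # zs)))) ({# g a #} + mset (map g (b # zs))))"
    by (rule prov.tensor[OF p1 p2])
  thus ?case by (simp add: add_mset_commute)
qed

lemma plus_big: "x \<in> set xs \<Longrightarrow> prov (add_mset x \<Gamma>) \<Longrightarrow> prov (add_mset (bigPlus xs) \<Gamma>)"
proof (induction xs rule: induct_list012)
  case 1 thus ?case by simp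
next
  case (2 y) thus ?case by simp
next
  case (3 y z zs)
  show ?case
  proof (cases "x = y")
    case True thus ?thesis using 3 by (simp add: prov.plus1)
  next
    case False thus ?thesis using 3 by (simp add: prov.plus2)
  qed
qed

lemma with_big: "(\<forall>x\<in>set xs. prov (add_mset x \<Gamma>)) \<Longrightarrow> prov (add_mset (bigWith xs) \<Gamma>)"
  by (induction xs rule: induct_list012) (simp_all add: prov.top prov.with_r)

definition Ds :: "'a list \<Rightarrow> 'a state \<Rightarrow> 'a form multiset" where
  "Ds V s = mset (map (\<lambda>a. dual (lit a (s a))) V)"

lemma state_intro: "prov (add_mset X (Ds V s)) \<Longrightarrow> prov {# enc_state V s, X #}"
  unfolding enc_state_def Ds_def by (rule par_big) simp

lemma pos_state: "agree V s r \<Longrightarrow> prov (add_mset (pos V r) (Ds V s))"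
  unfolding pos_def Ds_def
  by (rule tensor_big) (auto simp: agree_def prov_lit)

lemma posSF_state: "models V R s (SF p) \<Longrightarrow> prov (add_mset (pos_sf V p) (Ds V s))"
  unfolding pos_sf_def Ds_def
proof (rule tensor_big, intro ballI)
  fix a assume m: "models V R s (SF p)" and a: "a \<in> set V"
  show "prov {# case p a of None \<Rightarrow> Top | Some b \<Rightarrow> lit a b, dual (lit a (s a)) #}"
  proof (cases "p a")
    case None thus ?thesis by (simp add: prov.top)
  next
    case (Some b)
    hence "b = s a" using m a by simp
    thus ?thesis using Some prov_lit by simp
  qed
qed

lemma neg_state: "\<not> agree V s r \<Longrightarrow> prov (add_mset (neg V r) (Ds V s))"
proof -
  assume "\<not> agree V s r"
  then obtain a where a: "a \<in> set V" and ne: "s a \<noteq> r a" by (auto simp: agree_def)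
  obtain V1 V2 where V: "V = V1 @ a # V2" using split_list[OF a] by blast
  let ?Rest = "mset (map (\<lambda>a. dual (lit a (s a))) (V1 @ V2))"
  have D: "Ds V s = {# dual (lit a (s a)) #} + ?Rest" by (simp add: Ds_def V)
  have "dual (lit a (r a)) = lit a (s a)" using ne by (simp add: dual_lit)
  hence p1: "prov (add_mset (dual (lit a (r a))) {# dual (lit a (s a)) #})" using prov_lit by simp
  have p2: "prov (add_mset Top ?Rest)" by (rule prov.top)
  have "prov (add_mset (Tensor (dual (lit a (r a))) Top) ({# dual (lit a (s a)) #} + ?Rest))"
    by (rule prov.tensor[OF p1 p2])
  hence "prov (add_mset (Tensor (dual (lit a (r a))) Top) (Ds V s))" by (simp only: D)
  moreover have "Tensor (dual (lit a (r a))) Top \<in> set (map (\<lambda>a. Tensor (dual (lit a (r a))) Top) V)"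
    using a by simp
  ultimately show ?thesis unfolding neg_def by (intro plus_big) auto
qed

lemma TA_state:
  assumes "\<forall>(r, r')\<in>set R. agree V s r \<longrightarrow> prov {# enc_state V r', Y #}"
  shows "prov {# enc_state V s, TA V R Y #}"
proof (rule state_intro)
  show "prov (add_mset (TA V R Y) (Ds V s))" unfolding TA_def
  proof (rule with_big, intro ballI)
    fix x assume "x \<in> set (map (\<lambda>(s, s'). Plus (neg V s) (Tensor (pos V s) (Par (enc_state V s') Y))) R)"
    then obtain r r' where r: "(r, r') \<in> set R" and x: "x = Plus (neg V r) (Tensor (pos V r) (Par (enc_state V r') Y))"
      by auto
    show "prov (add_mset x (Ds V s))"
    proof (cases "agree V s r")
      case True
      have "prov {# enc_state V r', Y #}" using assms r True by blast
      hence "prov (add_mset (Par (enc_state V r') Y) {#})" by (simp add: prov.par)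
      hence "prov (add_mset (Tensor (pos V r) (Par (enc_state V r') Y)) (Ds V s + {#}))"
        by (rule prov.tensor[OF pos_state[OF True]])
      thus ?thesis using x by (simp add: prov.plus2)
    next
      case False thus ?thesis using x by (simp add: prov.plus1 neg_state)
    qed
  qed
qed

lemma TE_state:
  assumes r: "(r, r') \<in> set R" and ag: "agree V s r" and p: "prov {# enc_state V r', Y #}"
  shows "prov {# enc_state V s, TE V R Y #}"
proof (rule state_intro)
  have "prov (add_mset (Par (enc_state V r') Y) {#})" using p by (simp add: prov.par)
  hence "prov (add_mset (Tensor (pos V r) (Par (enc_state V r') Y)) (Ds V s + {#}))"
    by (rule prov.tensor[OF pos_state[OF ag]])
  moreover have "Tensor (pos V r) (Par (enc_state V r') Y) \<in>
    set (map (\<lambda>(s, s'). Tensor (pos V s) (Par (enc_state V s') Y)) R)" using r by force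
  ultimately show "prov (add_mset (TE V R Y) (Ds V s))" unfolding TE_def by (intro plus_big) auto
qed

lemma encst_agree: "agree V s s' \<Longrightarrow> enc_state V s = enc_state V s'"
proof -
  assume "agree V s s'"
  hence "map (\<lambda>a. dual (lit a (s a))) V = map (\<lambda>a. dual (lit a (s' a))) V"
    by (intro map_cong) (auto simp: agree_def)
  thus ?thesis unfolding enc_state_def by (rule arg_cong)
qed

fun allst :: "'a list \<Rightarrow> 'a state list" where
  "allst [] = [\<lambda>_. False]"
| "allst (a # V) = concat (map (\<lambda>s. [s(a := True), s(a := False)]) (allst V))"

lemma allst_cover: "\<exists>u\<in>set (allst V). agree V u s"
proof (induction V)
  case Nil thus ?case by (simp add: agree_def)
next
  case (Cons a V)
  then obtain u where u: "u \<in> set (allst V)" "agree V u s" by blast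
  have "u(a := s a) \<in> set (allst (a # V))" using u(1) by (cases "s a") auto
  moreover have "agree (a # V) (u(a := s a)) s" using u(2) by (auto simp: agree_def)
  ultimately show ?case by blast
qed

lemma inv_prov:
  assumes Pw: "P w" and Pag: "\<And>u w. agree V u w \<Longrightarrow> P w \<Longrightarrow> P u"
  shows "prov {# enc_state V w, bigPlus (map (pos V) (filter P (allst V))) #}"
proof -
  obtain u where u: "u \<in> set (allst V)" "agree V u w" using allst_cover by blast
  have "P u" using Pag[OF u(2) Pw] .
  hence x: "pos V u \<in> set (map (pos V) (filter P (allst V)))" using u(1) by simp
  have "prov (add_mset (pos V u) (Ds V w))" by (rule pos_state) (use u(2) agree_sym in blast)
  hence "prov {# enc_state V w, pos V u #}" by (rule state_intro)
  hence "prov (add_mset (pos V u) {# enc_state V w #})" by (simp add: add_mset_commute)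
  hence "prov (add_mset (bigPlus (map (pos V) (filter P (allst V)))) {# enc_state V w #})"
    by (rule plus_big[OF x])
  thus ?thesis by (simp add: add_mset_commute)
qed




lemma mu_seq: "prov {# E, subst 0 (Mu B) B #} \<Longrightarrow> prov {# E, Mu B #}"
proof -
  assume "prov {# E, subst 0 (Mu B) B #}"
  hence "prov (add_mset (subst 0 (Mu B) B) {# E #})" by (simp add: add_mset_commute)
  hence "prov (add_mset (Mu B) {# E #})" by (rule prov.mu)
  thus ?thesis by (simp add: add_mset_commute)
qed

lemma plus1_seq: "prov {# E, A #} \<Longrightarrow> prov {# E, Plus A B #}"
proof -
  assume "prov {# E, A #}"
  hence "prov (add_mset A {# E #})" by (simp add: add_mset_commute)
  hence "prov (add_mset (Plus A B) {# E #})" by (rule prov.plus1)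
  thus ?thesis by (simp add: add_mset_commute)
qed

lemma plus2_seq: "prov {# E, B #} \<Longrightarrow> prov {# E, Plus A B #}"
proof -
  assume "prov {# E, B #}"
  hence "prov (add_mset B {# E #})" by (simp add: add_mset_commute)
  hence "prov (add_mset (Plus A B) {# E #})" by (rule prov.plus2)
  thus ?thesis by (simp add: add_mset_commute)
qed

lemma with_seq: "prov {# E, A #} \<Longrightarrow> prov {# E, B #} \<Longrightarrow> prov {# E, With A B #}"
proof -
  assume "prov {# E, A #}" "prov {# E, B #}"
  hence "prov (add_mset A {# E #})" "prov (add_mset B {# E #})" by (simp_all add: add_mset_commute)
  hence "prov (add_mset (With A B) {# E #})" by (rule prov.with_r)
  thus ?thesis by (simp add: add_mset_commute)
qed

lemma dual_inv: "dual (bigPlus (map (pos V) us)) = bigWith (map (enc_state V) us)"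
  by (simp add: dual_bigPlus comp_def dual_pos)

lemma nu_seq:
  assumes "prov {# E, S #}" "prov {# dual S, subst 0 S B #}"
  shows "prov {# E, Nu B #}"
proof -
  have "prov (add_mset S {# E #})" using assms(1) by (simp add: add_mset_commute)
  hence "prov (add_mset (Nu B) {# E #})" using assms(2) by (rule prov.nu)
  thus ?thesis by (simp add: add_mset_commute)
qed

lemma inv_dual_prov:
  assumes "\<And>u. P u \<Longrightarrow> prov {# enc_state V u, X #}"
  shows "prov {# dual (bigPlus (map (pos V) (filter P (allst V)))), X #}"
proof -
  have "prov (add_mset (bigWith (map (enc_state V) (filter P (allst V)))) {# X #})"
    by (rule with_big) (auto intro: assms)
  thus ?thesis by (simp add: dual_inv)
qed

theorem complete:
  assumes ser: "serial V R"
  shows "models V R s F \<Longrightarrow> prov {# enc_state V s, enc V R F #}"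
proof (induction F arbitrary: s)
  case (SF p) thus ?case by (simp add: state_intro posSF_state)
next
  case (CAnd F G) thus ?case by (simp add: with_seq)
next
  case (COr F G) thus ?case by (auto simp: plus1_seq plus2_seq)
next
  case (CAX F)
  have "\<forall>(r, r')\<in>set R. agree V s r \<longrightarrow> prov {# enc_state V r', enc V R F #}"
  proof (clarify)
    fix r r' assume "(r, r') \<in> set R" "agree V s r"
    hence "trans V R s r'" by (rule trans_rule)
    hence "models V R r' F" using CAX.prems by simp
    thus "prov {# enc_state V r', enc V R F #}" by (rule CAX.IH)
  qed
  thus ?case by (simp add: TA_state)
next
  case (CEX F)
  then obtain t' where tr: "trans V R s t'" and f: "models V R t' F" by auto
  then obtain r r' where r: "(r, r') \<in> set R" "agree V s r" "agree V t' r'" unfolding trans_iff by blast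
  have "models V R r' F" using models_agree[OF r(3) f] .
  hence "prov {# enc_state V r', enc V R F #}" by (rule CEX.IH)
  thus ?case by (simp add: TE_state[OF r(1,2)])
next
  case (CAF F)
  let ?B = "Plus (lift 0 (enc V R F)) (TA V R (Var 0))"
  let ?BS = "{u. models V R u (CAF F) \<and> \<not> prov {# enc_state V u, Mu ?B #}}"
  have unf: "subst 0 (Mu ?B) ?B = Plus (enc V R F) (TA V R (Mu ?B))" by (simp add: subst_lift subst_TA)
  have nF: "\<not> models V R u F" if u: "u \<in> ?BS" for u
  proof
    assume "models V R u F"
    hence "prov {# enc_state V u, enc V R F #}" by (rule CAF.IH)
    hence "prov {# enc_state V u, subst 0 (Mu ?B) ?B #}" unfolding unf by (rule plus1_seq)
    hence "prov {# enc_state V u, Mu ?B #}" by (rule mu_seq)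
    thus False using u by blast
  qed
  have step: "\<exists>u'. trans V R u u' \<and> u' \<in> ?BS" if u: "u \<in> ?BS" for u
  proof -
    have "\<not> (\<forall>(r, r')\<in>set R. agree V u r \<longrightarrow> prov {# enc_state V r', Mu ?B #})"
    proof
      assume "\<forall>(r, r')\<in>set R. agree V u r \<longrightarrow> prov {# enc_state V r', Mu ?B #}"
      hence "prov {# enc_state V u, TA V R (Mu ?B) #}" by (rule TA_state)
      hence "prov {# enc_state V u, subst 0 (Mu ?B) ?B #}" unfolding unf by (rule plus2_seq)
      hence "prov {# enc_state V u, Mu ?B #}" by (rule mu_seq)
      thus False using u by blast
    qed
    then obtain r r' where r: "(r, r') \<in> set R" "agree V u r" and np: "\<not> prov {# enc_state V r', Mu ?B #}"
      by blast
    have tr: "trans V R u r'" using r by (rule trans_rule)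
    have "models V R r' (CAF F)" unfolding models.simps
    proof (intro allI impI)
      fix \<pi>' assume p': "is_path V R r' \<pi>'"
      let ?p = "\<lambda>i. case i of 0 \<Rightarrow> u | Suc j \<Rightarrow> \<pi>' j"
      have "is_path V R u ?p" by (rule path_cons[OF tr p'])
      then obtain i where i: "models V R (?p i) F" using u by auto
      show "\<exists>i. models V R (\<pi>' i) F"
      proof (cases i)
        case 0 thus ?thesis using i nF[OF u] by simp
      next
        case (Suc j) thus ?thesis using i by auto
      qed
    qed
    thus ?thesis using tr np by blast
  qed
  show ?case
  proof (rule ccontr)
    assume "\<not> prov {# enc_state V s, enc V R (CAF F) #}"
    hence "s \<in> ?BS" using CAF.prems by simp
    then obtain \<pi> where p: "is_path V R s \<pi>" and inB: "\<forall>i. \<pi> i \<in> ?BS"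
      using inf_path[of s ?BS V R] step by blast
    have "\<forall>i. \<not> models V R (\<pi> i) F" using inB nF by blast
    thus False using CAF.prems p by auto
  qed
next
  case (CEF F)
  let ?B = "Plus (lift 0 (enc V R F)) (TE V R (Var 0))"
  have unf: "subst 0 (Mu ?B) ?B = Plus (enc V R F) (TE V R (Mu ?B))" by (simp add: subst_lift subst_TE)
  have key: "\<forall>u \<pi>. is_path V R u \<pi> \<longrightarrow> models V R (\<pi> i) F \<longrightarrow> prov {# enc_state V u, Mu ?B #}" for i
  proof (induction i)
    case 0
    show ?case
    proof (intro allI impI)
      fix u \<pi> assume p: "is_path V R u \<pi>" and f: "models V R (\<pi> 0) F"
      have "\<pi> 0 = u" using p by (simp add: is_path_def)
      hence "prov {# enc_state V u, enc V R F #}" using f CEF.IH by simp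
      hence "prov {# enc_state V u, subst 0 (Mu ?B) ?B #}" unfolding unf by (rule plus1_seq)
      thus "prov {# enc_state V u, Mu ?B #}" by (rule mu_seq)
    qed
  next
    case (Suc i)
    show ?case
    proof (intro allI impI)
      fix u \<pi> assume p: "is_path V R u \<pi>" and f: "models V R (\<pi> (Suc i)) F"
      have p1: "prov {# enc_state V (\<pi> 1), Mu ?B #}" using Suc.IH path_tail[OF p] f by auto
      have "trans V R u (\<pi> 1)" by (rule path_trans1[OF p])
      then obtain r r' where r: "(r, r') \<in> set R" "agree V u r" "agree V (\<pi> 1) r'"
        unfolding trans_iff by blast
      have "prov {# enc_state V r', Mu ?B #}" using p1 encst_agree[OF r(3)] by simp
      hence "prov {# enc_state V u, TE V R (Mu ?B) #}" by (rule TE_state[OF r(1,2)])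
      hence "prov {# enc_state V u, subst 0 (Mu ?B) ?B #}" unfolding unf by (rule plus2_seq)
      thus "prov {# enc_state V u, Mu ?B #}" by (rule mu_seq)
    qed
  qed
  from CEF.prems obtain \<pi> i where "is_path V R s \<pi>" "models V R (\<pi> i) F" by auto
  hence "prov {# enc_state V s, Mu ?B #}" using key by blast
  thus ?case by simp
next
  case (CAG F)
  let ?B = "With (lift 0 (enc V R F)) (TA V R (Var 0))"
  let ?P = "\<lambda>u. models V R u (CAG F)"
  let ?S = "bigPlus (map (pos V) (filter ?P (allst V)))"
  have Pag: "\<And>u w. agree V u w \<Longrightarrow> ?P w \<Longrightarrow> ?P u" using models_agree agree_sym by blast
  have unf: "subst 0 ?S ?B = With (enc V R F) (TA V R ?S)" by (simp add: subst_lift subst_TA)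
  have inv: "\<And>w. ?P w \<Longrightarrow> prov {# enc_state V w, ?S #}" by (rule inv_prov) (use Pag in blast)+
  have "prov {# dual ?S, subst 0 ?S ?B #}" unfolding unf
  proof (rule inv_dual_prov)
    fix u assume u: "?P u"
    obtain \<pi> where p: "is_path V R u \<pi>" using serial_path[OF ser] by blast
    have "models V R u F" using u p by (metis is_path_def models.simps(8))
    hence p1: "prov {# enc_state V u, enc V R F #}" by (rule CAG.IH)
    have "\<forall>(r, r')\<in>set R. agree V u r \<longrightarrow> prov {# enc_state V r', ?S #}"
    proof (clarify)
      fix r r' assume "(r, r') \<in> set R" "agree V u r"
      hence tr: "trans V R u r'" by (rule trans_rule)
      have "?P r'" unfolding models.simps
      proof (intro allI impI)
        fix \<pi>' i assume p': "is_path V R r' \<pi>'"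
        have "is_path V R u (\<lambda>i. case i of 0 \<Rightarrow> u | Suc j \<Rightarrow> \<pi>' j)" by (rule path_cons[OF tr p'])
        hence "models V R ((\<lambda>i. case i of 0 \<Rightarrow> u | Suc j \<Rightarrow> \<pi>' j) (Suc i)) F"
          using u unfolding models.simps by blast
        thus "models V R (\<pi>' i) F" by simp
      qed
      thus "prov {# enc_state V r', ?S #}" by (rule inv)
    qed
    hence p2: "prov {# enc_state V u, TA V R ?S #}" by (rule TA_state)
    show "prov {# enc_state V u, With (enc V R F) (TA V R ?S) #}" by (rule with_seq[OF p1 p2])
  qed
  hence "prov {# enc_state V s, Nu ?B #}" by (rule nu_seq[OF inv[OF CAG.prems]])
  thus ?case by simp
next
  case (CEG F)
  let ?B = "With (lift 0 (enc V R F)) (TE V R (Var 0))"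
  let ?P = "\<lambda>u. models V R u (CEG F)"
  let ?S = "bigPlus (map (pos V) (filter ?P (allst V)))"
  have Pag: "\<And>u w. agree V u w \<Longrightarrow> ?P w \<Longrightarrow> ?P u" using models_agree agree_sym by blast
  have unf: "subst 0 ?S ?B = With (enc V R F) (TE V R ?S)" by (simp add: subst_lift subst_TE)
  have inv: "\<And>w. ?P w \<Longrightarrow> prov {# enc_state V w, ?S #}" by (rule inv_prov) (use Pag in blast)+
  have "prov {# dual ?S, subst 0 ?S ?B #}" unfolding unf
  proof (rule inv_dual_prov)
    fix u assume u: "?P u"
    then obtain \<pi> where p: "is_path V R u \<pi>" and f: "\<forall>i. models V R (\<pi> i) F" by auto
    have "models V R u F" using p f by (metis is_path_def)
    hence p1: "prov {# enc_state V u, enc V R F #}" by (rule CEG.IH)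
    have "trans V R u (\<pi> 1)" by (rule path_trans1[OF p])
    then obtain r r' where r: "(r, r') \<in> set R" "agree V u r" "agree V (\<pi> 1) r'"
      unfolding trans_iff by blast
    have "?P (\<pi> 1)" using path_tail[OF p] f unfolding models.simps by blast
    hence "?P r'" using models_agree[OF r(3)] by blast
    hence "prov {# enc_state V r', ?S #}" by (rule inv)
    hence p2: "prov {# enc_state V u, TE V R ?S #}" by (rule TE_state[OF r(1,2)])
    show "prov {# enc_state V u, With (enc V R F) (TE V R ?S) #}" by (rule with_seq[OF p1 p2])
  qed
  hence "prov {# enc_state V s, Nu ?B #}" by (rule nu_seq[OF inv[OF CEG.prems]])
  thus ?case by simp
next
  case (CAU F G)
  let ?B = "Plus (lift 0 (enc V R G)) (With (lift 0 (enc V R F)) (TA V R (Var 0)))"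
  let ?BS = "{u. models V R u (CAU F G) \<and> \<not> prov {# enc_state V u, Mu ?B #}}"
  have unf: "subst 0 (Mu ?B) ?B = Plus (enc V R G) (With (enc V R F) (TA V R (Mu ?B)))"
    by (simp add: subst_lift subst_TA)
  have nG: "\<not> models V R u G" if u: "u \<in> ?BS" for u
  proof
    assume "models V R u G"
    hence "prov {# enc_state V u, enc V R G #}" by (rule CAU.IH(2))
    hence "prov {# enc_state V u, subst 0 (Mu ?B) ?B #}" unfolding unf by (rule plus1_seq)
    hence "prov {# enc_state V u, Mu ?B #}" by (rule mu_seq)
    thus False using u by blast
  qed
  have fF: "models V R u F" if u: "u \<in> ?BS" for u
  proof -
    obtain \<pi> where p: "is_path V R u \<pi>" using serial_path[OF ser] by blast
    have p0: "\<pi> 0 = u" using p by (simp add: is_path_def)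
    obtain i where i: "models V R (\<pi> i) G" "\<forall>j<i. models V R (\<pi> j) F" using u p by auto
    have "i \<noteq> 0"
    proof
      assume "i = 0" thus False using i(1) p0 nG[OF u] by simp
    qed
    thus ?thesis using i(2) p0 by auto
  qed
  have step: "\<exists>u'. trans V R u u' \<and> u' \<in> ?BS" if u: "u \<in> ?BS" for u
  proof -
    have "\<not> (\<forall>(r, r')\<in>set R. agree V u r \<longrightarrow> prov {# enc_state V r', Mu ?B #})"
    proof
      assume "\<forall>(r, r')\<in>set R. agree V u r \<longrightarrow> prov {# enc_state V r', Mu ?B #}"
      hence p2: "prov {# enc_state V u, TA V R (Mu ?B) #}" by (rule TA_state)
      have p1: "prov {# enc_state V u, enc V R F #}" by (rule CAU.IH(1)[OF fF[OF u]])
      have "prov {# enc_state V u, With (enc V R F) (TA V R (Mu ?B)) #}" by (rule with_seq[OF p1 p2])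
      hence "prov {# enc_state V u, subst 0 (Mu ?B) ?B #}" unfolding unf by (rule plus2_seq)
      hence "prov {# enc_state V u, Mu ?B #}" by (rule mu_seq)
      thus False using u by blast
    qed
    then obtain r r' where r: "(r, r') \<in> set R" "agree V u r" and np: "\<not> prov {# enc_state V r', Mu ?B #}"
      by blast
    have tr: "trans V R u r'" using r by (rule trans_rule)
    have "models V R r' (CAU F G)" unfolding models.simps
    proof (intro allI impI)
      fix \<pi>' assume p': "is_path V R r' \<pi>'"
      let ?p = "\<lambda>i. case i of 0 \<Rightarrow> u | Suc j \<Rightarrow> \<pi>' j"
      have "is_path V R u ?p" by (rule path_cons[OF tr p'])
      then obtain i where i: "models V R (?p i) G" "\<forall>j<i. models V R (?p j) F" using u by auto
      show "\<exists>i. models V R (\<pi>' i) G \<and> (\<forall>j<i. models V R (\<pi>' j) F)"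
      proof (cases i)
        case 0 thus ?thesis using i nG[OF u] by simp
      next
        case (Suc k)
        have "models V R (\<pi>' k) G" using i(1) Suc by simp
        moreover have "\<forall>j<k. models V R (\<pi>' j) F"
        proof (intro allI impI)
          fix j assume "j < k"
          hence "Suc j < i" using Suc by simp
          thus "models V R (\<pi>' j) F" using i(2) by fastforce
        qed
        ultimately show ?thesis by blast
      qed
    qed
    thus ?thesis using tr np by blast
  qed
  show ?case
  proof (rule ccontr)
    assume "\<not> prov {# enc_state V s, enc V R (CAU F G) #}"
    hence "s \<in> ?BS" using CAU.prems by simp
    then obtain \<pi> where p: "is_path V R s \<pi>" and inB: "\<forall>i. \<pi> i \<in> ?BS"
      using inf_path[of s ?BS V R] step by blast
    obtain i where "models V R (\<pi> i) G" using CAU.prems p by auto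
    thus False using inB nG by blast
  qed
next
  case (CEU F G)
  let ?B = "Plus (lift 0 (enc V R G)) (With (lift 0 (enc V R F)) (TE V R (Var 0)))"
  have unf: "subst 0 (Mu ?B) ?B = Plus (enc V R G) (With (enc V R F) (TE V R (Mu ?B)))"
    by (simp add: subst_lift subst_TE)
  have key: "\<forall>u \<pi>. is_path V R u \<pi> \<longrightarrow> models V R (\<pi> i) G \<longrightarrow> (\<forall>j<i. models V R (\<pi> j) F) \<longrightarrow>
     prov {# enc_state V u, Mu ?B #}" for i
  proof (induction i)
    case 0
    show ?case
    proof (intro allI impI)
      fix u \<pi> assume p: "is_path V R u \<pi>" and g: "models V R (\<pi> 0) G"
      have "\<pi> 0 = u" using p by (simp add: is_path_def)
      hence "prov {# enc_state V u, enc V R G #}" using g CEU.IH(2) by simp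
      hence "prov {# enc_state V u, subst 0 (Mu ?B) ?B #}" unfolding unf by (rule plus1_seq)
      thus "prov {# enc_state V u, Mu ?B #}" by (rule mu_seq)
    qed
  next
    case (Suc i)
    show ?case
    proof (intro allI impI)
      fix u \<pi> assume p: "is_path V R u \<pi>" and g: "models V R (\<pi> (Suc i)) G"
        and f: "\<forall>j<Suc i. models V R (\<pi> j) F"
      have "\<forall>j<i. models V R (\<pi> (Suc j)) F" using f by simp
      hence p1: "prov {# enc_state V (\<pi> 1), Mu ?B #}" using Suc.IH path_tail[OF p] g by auto
      have "trans V R u (\<pi> 1)" by (rule path_trans1[OF p])
      then obtain r r' where r: "(r, r') \<in> set R" "agree V u r" "agree V (\<pi> 1) r'"
        unfolding trans_iff by blast
      have "prov {# enc_state V r', Mu ?B #}" using p1 encst_agree[OF r(3)] by simp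
      hence p2: "prov {# enc_state V u, TE V R (Mu ?B) #}" by (rule TE_state[OF r(1,2)])
      have "\<pi> 0 = u" using p by (simp add: is_path_def)
      hence "models V R u F" using f by auto
      hence p3: "prov {# enc_state V u, enc V R F #}" by (rule CEU.IH(1))
      have "prov {# enc_state V u, With (enc V R F) (TE V R (Mu ?B)) #}" by (rule with_seq[OF p3 p2])
      hence "prov {# enc_state V u, subst 0 (Mu ?B) ?B #}" unfolding unf by (rule plus2_seq)
      thus "prov {# enc_state V u, Mu ?B #}" by (rule mu_seq)
    qed
  qed
  from CEU.prems obtain \<pi> i where "is_path V R s \<pi>" "models V R (\<pi> i) G" "\<forall>j<i. models V R (\<pi> j) F"
    by auto
  hence "prov {# enc_state V s, Mu ?B #}" using key by blast
  thus ?case by simp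
qed

theorem theorem5:
  fixes V :: "'a list" and R :: "'a rule list" and F :: "'a ctl" and s :: "'a state"
  assumes "distinct V"
    and "serial V R"
  shows "models V R s F \<longleftrightarrow> prov {# enc_state V s, enc V R F #}"
  using complete[OF assms(2)] sound_main[OF assms] by blast


end
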